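(* Assume Assumption A and that the limiting chain $X_R$ has $\mathfrak n\ge2$ recurrent classes $\mathscr E_1,\dots,\mathscr E_{\mathfrak n}$; let $\breve{\mathscr E}_x=\bigcup_{y\ne x}\mathscr E_y$. Then the family of sequences $\big(\mathrm{Cap}_N(\mathscr E_x,\breve{\mathscr E}_x)/\mu_N(\mathscr E_x)\big)_{N\ge1}$, $x\in\{1,\dots,\mathfrak n\}$, is ordered.
   Context: Setting: $E$ is a fixed finite set; for each $N\ge1$, $(\eta^N_t)$ is a continuous-time irreducible Markov chain on $E$ with jump rates $R_N(\eta,\xi)$, holding rates $\lambda_N(\eta)=\sum_{\xi\ne\eta}R_N(\eta,\xi)$, unique invariant probability measure $\mu_N$; $\mathbb P_\eta$ the law started at $\eta$; $H_A=\inf\{t>0:\eta^N_t\in A\}$, $H^+_A=\inf\{t>\tau_1:\eta^N_t\in A\}$, $\tau_1$ first jump time; $\mathrm{Cap}_N(A,B)=\sum_{\eta\in A}\mu_N(\eta)\lambda_N(\eta)\mathbb P_\eta[H_B<H^+_A]$. Ordered families: a finite family of sequences of positive reals $(a^r_N)$, $r\in\mathfrak R$, is ordered if for all $r\neq s$, $\arctan(a^r_N/a^s_N)$ converges. Assumption A: (i) for each $\eta\neq\xi$, either $R_N(\eta,\xi)=0$ for all $N$ or $R_N(\eta,\xi)>0$ for all $N$; let $\mathbb B$ be the set of pairs with positive rates. (ii) For every $m\ge1$ the family $\prod_{(\eta,\xi)\in\mathbb B}R_N(\eta,\xi)^{k(\eta,\xi)}$, $k:\mathbb B\to\mathbb Z_+$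 with $\sum k=m$, is ordered. Limiting chain: $\alpha_N^{-1}=\sum_\eta\sum_{\xi\ne\eta}R_N(\eta,\xi)$; $R(\eta,\xi)=\lim_N\alpha_NR_N(\eta,\xi)\in[0,1]$; $X_R$ is the Markov chain on $E$ with rates $R$. *)

theory Defs
  imports "HOL-Analysis.Analysis"
begin

text \<open>Rates: R x y is the jump rate from x to y (diagonal values are ignored).\<close>

definition hold_rate :: "('a::finite \<Rightarrow> 'a \<Rightarrow> real) \<Rightarrow> 'a \<Rightarrow> real" where
  "hold_rate R x = (\<Sum>y\<in>UNIV - {x}. R x y)"

definition jump_graph :: "('a \<Rightarrow> 'a \<Rightarrow> real) \<Rightarrow> ('a \<times> 'a) set" where
  "jump_graph R = {(a, b). a \<noteq> b \<and> R a b > 0}"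

definition reachable :: "('a \<Rightarrow> 'a \<Rightarrow> real) \<Rightarrow> 'a \<Rightarrow> 'a \<Rightarrow> bool" where
  "reachable R x y \<longleftrightarrow> (x, y) \<in> (jump_graph R)\<^sup>*"

definition irreducible_chain :: "('a \<Rightarrow> 'a \<Rightarrow> real) \<Rightarrow> bool" where
  "irreducible_chain R \<longleftrightarrow> (\<forall>x y. reachable R x y)"

definition invariant_prob :: "('a::finite \<Rightarrow> 'a \<Rightarrow> real) \<Rightarrow> ('a \<Rightarrow> real) \<Rightarrow> bool" where
  "invariant_prob R \<mu> \<longleftrightarrow> (\<forall>x. \<mu> x \<ge> 0) \<and> sum \<mu> UNIV = 1 \<and>
     (\<forall>y. (\<Sum>x\<in>UNIV - {y}. \<mu> x * R x y) = \<mu> y * hold_rate R y)"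

definition inv_meas :: "('a::finite \<Rightarrow> 'a \<Rightarrow> real) \<Rightarrow> 'a \<Rightarrow> real" where
  "inv_meas R = (THE \<mu>. invariant_prob R \<mu>)"

definition jump_prob :: "('a::finite \<Rightarrow> 'a \<Rightarrow> real) \<Rightarrow> 'a \<Rightarrow> 'a \<Rightarrow> real" where
  "jump_prob R x y = (if x = y then 0 else R x y / hold_rate R x)"

fun path_weight :: "('a \<Rightarrow> 'a \<Rightarrow> real) \<Rightarrow> 'a \<Rightarrow> 'a list \<Rightarrow> real" where
  "path_weight P x [] = 1"
| "path_weight P x (y # ys) = P x y * path_weight P y ys"

text \<open>P_eta[H_B < H_A^+]: if eta is in B then H_B = 0 < H_A^+; otherwise the event is the
  disjoint union over k of the cylinder events that the jump chain visits at steps 1..k-1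
  states outside A and B and at step k a state of B not in A.\<close>
definition escape_prob :: "('a::finite \<Rightarrow> 'a \<Rightarrow> real) \<Rightarrow> 'a set \<Rightarrow> 'a set \<Rightarrow> 'a \<Rightarrow> real" where
  "escape_prob R A B \<eta> =
    (if \<eta> \<in> B then 1 else
     (\<Sum>k. \<Sum>xs\<in>{xs. length xs = Suc k \<and> last xs \<in> B - A \<and> (\<forall>i<k. xs ! i \<notin> A \<union> B)}.
            path_weight (jump_prob R) \<eta> xs))"

definition capacity :: "('a::finite \<Rightarrow> 'a \<Rightarrow> real) \<Rightarrow> 'a set \<Rightarrow> 'a set \<Rightarrow> real" where
  "capacity R A B = (\<Sum>\<eta>\<in>A. inv_meas R \<eta> * hold_rate R \<eta> * escape_prob R A B \<eta>)"

definition ordered_family :: "'i set \<Rightarrow> ('i \<Rightarrow> nat \<Rightarrow> real) \<Rightarrow> bool" where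
  "ordered_family I a \<longleftrightarrow> (\<forall>r\<in>I. \<forall>N. a r N > 0) \<and>
     (\<forall>r\<in>I. \<forall>s\<in>I. r \<noteq> s \<longrightarrow> convergent (\<lambda>N. arctan (a r N / a s N)))"

definition assumption_A :: "(nat \<Rightarrow> 'a::finite \<Rightarrow> 'a \<Rightarrow> real) \<Rightarrow> bool" where
  "assumption_A RN \<longleftrightarrow>
     (\<forall>x y. x \<noteq> y \<longrightarrow> (\<forall>N. RN N x y = 0) \<or> (\<forall>N. RN N x y > 0)) \<and>
     (\<forall>m\<ge>1. ordered_family
        {k :: 'a \<times> 'a \<Rightarrow> nat. (\<forall>p. p \<notin> jump_graph (RN 0) \<longrightarrow> k p = 0) \<and>
                               sum k (jump_graph (RN 0)) = m}
        (\<lambda>k N. \<Prod>p\<in>jump_graph (RN 0). RN N (fst p) (snd p) ^ k p))"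

definition time_scale :: "(nat \<Rightarrow> 'a::finite \<Rightarrow> 'a \<Rightarrow> real) \<Rightarrow> nat \<Rightarrow> real" where
  "time_scale RN N = 1 / (\<Sum>\<eta>\<in>UNIV. \<Sum>\<xi>\<in>UNIV - {\<eta>}. RN N \<eta> \<xi>)"

definition limit_rates :: "(nat \<Rightarrow> 'a::finite \<Rightarrow> 'a \<Rightarrow> real) \<Rightarrow> 'a \<Rightarrow> 'a \<Rightarrow> real" where
  "limit_rates RN \<eta> \<xi> = lim (\<lambda>N. time_scale RN N * RN N \<eta> \<xi>)"

definition recurrent_state :: "('a \<Rightarrow> 'a \<Rightarrow> real) \<Rightarrow> 'a \<Rightarrow> bool" where
  "recurrent_state R x \<longleftrightarrow> (\<forall>y. reachable R x y \<longrightarrow> reachable R y x)"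

definition recurrent_classes :: "('a \<Rightarrow> 'a \<Rightarrow> real) \<Rightarrow> 'a set set" where
  "recurrent_classes R =
     (\<lambda>x. {y. reachable R x y \<and> reachable R y x}) ` {x. recurrent_state R x}"

end

theory Submission
  imports Defs
begin

lemma arctan_cases:
  fixes x :: "nat \<Rightarrow> real"
  assumes pos: "\<And>N. x N > 0" and conv: "convergent (\<lambda>N. arctan (x N))"
  shows "(\<exists>L\<ge>0. x \<longlonglongrightarrow> L) \<or> filterlim x at_top sequentially"
proof -
  obtain th where th: "(\<lambda>N. arctan (x N)) \<longlonglongrightarrow> th" using conv convergent_def by blast
  have le: "th \<le> pi/2"
    using th by (rule LIMSEQ_le_const2) (intro exI[of _ 0] allI impI less_imp_le arctan_ubound)
  have ge: "0 \<le> th"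
    using th by (rule LIMSEQ_le_const) (auto intro: less_imp_le pos)
  show ?thesis
  proof (cases "th < pi/2")
    case True
    have "cos th \<noteq> 0" using True ge by (intro cos_gt_zero_pi[THEN less_imp_neq, symmetric] | simp)+ 
    then have "isCont tan th" by (rule isCont_tan)
    then have "(\<lambda>N. tan (arctan (x N))) \<longlonglongrightarrow> tan th"
      using th isCont_tendsto_compose by blast
    then have lim: "x \<longlonglongrightarrow> tan th" by (simp add: tan_arctan)
    have "0 \<le> tan th" using lim by (rule LIMSEQ_le_const) (auto intro: less_imp_le pos)
    then show ?thesis using lim by blast
  next
    case False
    then have eq: "th = pi/2" using le by simp
    have "filterlim x at_top sequentially"
      unfolding filterlim_at_top
    proof
      fix Z :: real
      have "arctan Z < th" using eq arctan_ubound[of Z] by simp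
      then have "eventually (\<lambda>N. arctan Z < arctan (x N)) sequentially"
        using th order_tendstoD(1) by blast
      then show "eventually (\<lambda>N. Z \<le> x N) sequentially"
        by (rule eventually_mono) (simp add: arctan_less_iff)
    qed
    then show ?thesis by blast
  qed
qed


locale mt =
  fixes RN :: "nat \<Rightarrow> 'a::finite \<Rightarrow> 'a \<Rightarrow> real"
  assumes nonneg: "\<And>N x y. RN N x y \<ge> 0" and A: "assumption_A RN"
begin

definition G0 :: "('a \<times> 'a) set" where "G0 = jump_graph (RN 0)"
definition okk :: "('a \<times> 'a \<Rightarrow> nat) \<Rightarrow> bool" where "okk k \<longleftrightarrow> (\<forall>p. p \<notin> G0 \<longrightarrow> k p = 0)"
definition deg :: "('a \<times> 'a \<Rightarrow> nat) \<Rightarrow> nat" where "deg k = sum k G0"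
definition mono :: "('a \<times> 'a \<Rightarrow> nat) \<Rightarrow> nat \<Rightarrow> real" where
  "mono k N = (\<Prod>p\<in>G0. RN N (fst p) (snd p) ^ k p)"
definition mq :: "('a \<times> 'a \<Rightarrow> nat) \<Rightarrow> ('a \<times> 'a \<Rightarrow> nat) \<Rightarrow> nat \<Rightarrow> real" where
  "mq k1 k2 N = mono k1 N / mono k2 N"
definition tame :: "int \<Rightarrow> (nat \<Rightarrow> real) \<Rightarrow> bool" where
  "tame d f \<longleftrightarrow> (\<forall>N. f N > 0) \<and> (\<exists>k1 k2 c. okk k1 \<and> okk k2 \<and> int (deg k1) - int (deg k2) = d
      \<and> c > 0 \<and> (\<lambda>N. f N / mq k1 k2 N) \<longlonglongrightarrow> c)"
definition ZT :: "int \<Rightarrow> (nat \<Rightarrow> real) \<Rightarrow> bool" where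
  "ZT d f \<longleftrightarrow> f = (\<lambda>N. 0) \<or> tame d f"

lemma A1: "x \<noteq> y \<Longrightarrow> (\<forall>N. RN N x y = 0) \<or> (\<forall>N. RN N x y > 0)"
  using A unfolding assumption_A_def by blast

lemma A2:
  assumes "okk k" "okk k'" "deg k = m" "deg k' = m" "m \<ge> 1" "k \<noteq> k'"
  shows "convergent (\<lambda>N. arctan (mono k N / mono k' N))"
proof -
  have "ordered_family
        {k :: 'a \<times> 'a \<Rightarrow> nat. (\<forall>p. p \<notin> jump_graph (RN 0) \<longrightarrow> k p = 0) \<and>
                               sum k (jump_graph (RN 0)) = m}
        (\<lambda>k N. \<Prod>p\<in>jump_graph (RN 0). RN N (fst p) (snd p) ^ k p)"
    using A assms(5) unfolding assumption_A_def by blast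
  then show ?thesis using assms unfolding ordered_family_def okk_def deg_def mono_def G0_def
    by auto
qed

lemma G0_pos: "p \<in> G0 \<Longrightarrow> RN N (fst p) (snd p) > 0"
  using A1[of "fst p" "snd p"] unfolding G0_def jump_graph_def
  by (cases p) force

lemma mono_pos: "mono k N > 0"
  unfolding mono_def by (intro prod_pos ballI zero_less_power G0_pos)

lemma mq_pos: "mq k1 k2 N > 0"
  unfolding mq_def using mono_pos by simp

lemma mono_add: "mono (\<lambda>p. k1 p + k2 p) N = mono k1 N * mono k2 N"
  unfolding mono_def by (simp add: power_add prod.distrib)

lemma deg_add: "deg (\<lambda>p. k1 p + k2 p) = deg k1 + deg k2"
  unfolding deg_def by (simp add: sum.distrib)

lemma okk_add: "okk k1 \<Longrightarrow> okk k2 \<Longrightarrow> okk (\<lambda>p. k1 p + k2 p)"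
  unfolding okk_def by simp

lemma finite_G0: "finite G0" by simp

lemma cmp_mono:
  assumes "okk k1" "okk k2" "deg k1 = deg k2"
  shows "(\<exists>L\<ge>0. (\<lambda>N. mono k1 N / mono k2 N) \<longlonglongrightarrow> L) \<or>
         filterlim (\<lambda>N. mono k1 N / mono k2 N) at_top sequentially"
proof (cases "k1 = k2")
  case True
  then show ?thesis using mono_pos by (auto intro!: exI[of _ 1] simp: less_imp_neq[symmetric])
next
  case False
  show ?thesis
  proof (cases "deg k1 = 0")
    case True
    then have "\<forall>p\<in>G0. k1 p = 0" "\<forall>p\<in>G0. k2 p = 0" using assms unfolding deg_def by auto
    then have "k1 = k2" using assms unfolding okk_def by (metis ext)
    then show ?thesis using False by simp
  next
    case F2: False
    have "convergent (\<lambda>N. arctan (mono k1 N / mono k2 N))"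
      using A2[OF assms(1,2) refl, of ] assms F2 False by auto
    then show ?thesis by (intro arctan_cases) (auto simp: mono_pos)
  qed
qed

lemma tame_def2:
  assumes "tame d f"
  obtains k1 k2 c where "okk k1" "okk k2" "int (deg k1) - int (deg k2) = d" "c > 0"
    "(\<lambda>N. f N / mq k1 k2 N) \<longlonglongrightarrow> c" "\<And>N. f N > 0"
  using assms that unfolding tame_def by auto

lemma mq_ratio: "mq k1 k2 N / mq k1' k2' N = mono (\<lambda>p. k1 p + k2' p) N / mono (\<lambda>p. k1' p + k2 p) N"
  unfolding mq_def mono_add using mono_pos[of k2 N] mono_pos[of k2' N] mono_pos[of k1' N]
  by (simp add: field_simps)

lemma cmp_mq:
  assumes "okk k1" "okk k2" "okk k1'" "okk k2'"
    "int (deg k1) - int (deg k2) = int (deg k1') - int (deg k2')"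
  shows "(\<exists>L\<ge>0. (\<lambda>N. mq k1 k2 N / mq k1' k2' N) \<longlonglongrightarrow> L) \<or>
         filterlim (\<lambda>N. mq k1 k2 N / mq k1' k2' N) at_top sequentially"
  unfolding mq_ratio
  by (rule cmp_mono) (use assms in \<open>auto simp: okk_add deg_add\<close>)

lemma cmp_tame:
  assumes "tame d f" "tame d g"
  shows "(\<exists>L\<ge>0. (\<lambda>N. f N / g N) \<longlonglongrightarrow> L) \<or> filterlim (\<lambda>N. f N / g N) at_top sequentially"
proof -
  obtain k1 k2 c where k: "okk k1" "okk k2" "int (deg k1) - int (deg k2) = d" "c > 0"
    "(\<lambda>N. f N / mq k1 k2 N) \<longlonglongrightarrow> c" "\<And>N. f N > 0" by (rule tame_def2[OF assms(1)]) blast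
  obtain k1' k2' c' where k': "okk k1'" "okk k2'" "int (deg k1') - int (deg k2') = d" "c' > 0"
    "(\<lambda>N. g N / mq k1' k2' N) \<longlonglongrightarrow> c'" "\<And>N. g N > 0" by (rule tame_def2[OF assms(2)]) blast
  have eq: "f N / g N = (f N / mq k1 k2 N) * (mq k1 k2 N / mq k1' k2' N) * inverse (g N / mq k1' k2' N)" for N
    using mq_pos[of k1 k2 N] mq_pos[of k1' k2' N] k(6)[of N] k'(6)[of N] by (simp add: field_simps)
  have inv: "(\<lambda>N. inverse (g N / mq k1' k2' N)) \<longlonglongrightarrow> inverse c'"
    using k' by (intro tendsto_inverse) auto
  from cmp_mq[OF k(1,2) k'(1,2)] k(3) k'(3)
  consider (fin) L where "L \<ge> 0" "(\<lambda>N. mq k1 k2 N / mq k1' k2' N) \<longlonglongrightarrow> L"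
    | (inf) "filterlim (\<lambda>N. mq k1 k2 N / mq k1' k2' N) at_top sequentially" by auto
  then show ?thesis
  proof cases
    case fin
    have "(\<lambda>N. f N / g N) \<longlonglongrightarrow> c * L * inverse c'"
      unfolding eq by (intro tendsto_mult fin k(5) inv)
    moreover have "c * L * inverse c' \<ge> 0" using fin k(4) k'(4) by simp
    ultimately show ?thesis by blast
  next
    case inf
    have "filterlim (\<lambda>N. (f N / mq k1 k2 N) * (mq k1 k2 N / mq k1' k2' N)) at_top sequentially"
      by (rule filterlim_tendsto_pos_mult_at_top[OF k(5) k(4) inf])
    then have "filterlim (\<lambda>N. inverse (g N / mq k1' k2' N) * ((f N / mq k1 k2 N) * (mq k1 k2 N / mq k1' k2' N))) at_top sequentially"
      by (rule filterlim_tendsto_pos_mult_at_top[OF inv positive_imp_inverse_positive[OF k'(4)]])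
    then show ?thesis unfolding eq by (simp add: mult.commute mult.left_commute)
  qed
qed


lemma tameI:
  assumes "\<And>N. f N > 0" "okk k1" "okk k2" "int (deg k1) - int (deg k2) = d" "c > 0"
    "(\<lambda>N. f N / mq k1 k2 N) \<longlonglongrightarrow> c"
  shows "tame d f"
  using assms unfolding tame_def by blast

lemma tame_pos: "tame d f \<Longrightarrow> f N > 0"
  unfolding tame_def by blast

lemma tame_one: "tame 0 (\<lambda>N. 1)"
proof (rule tameI[of _ "\<lambda>_. 0" "\<lambda>_. 0" _ 1])
  show "(\<lambda>N. 1 / mq (\<lambda>_. 0) (\<lambda>_. 0) N) \<longlonglongrightarrow> 1"
    by (simp add: mq_def mono_def)
qed (auto simp: okk_def deg_def)

lemma tame_rate:
  assumes "(x, y) \<in> G0"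
  shows "tame 1 (\<lambda>N. RN N x y)"
proof (rule tameI[of _ "\<lambda>p. if p = (x, y) then 1 else 0" "\<lambda>_. 0" _ 1])
  have "mono (\<lambda>p. if p = (x, y) then 1 else 0) N = RN N x y" for N
  proof -
    have "mono (\<lambda>p. if p = (x, y) then 1 else 0) N =
      (\<Prod>p\<in>G0. if p = (x, y) then RN N (fst p) (snd p) else 1)"
      unfolding mono_def by (intro prod.cong) auto
    also have "\<dots> = RN N x y" using assms by (simp add: prod.delta)
    finally show ?thesis .
  qed
  then have "RN N x y / mq (\<lambda>p. if p = (x, y) then 1 else 0) (\<lambda>_. 0) N = 1" for N
    using G0_pos[OF assms, of N] by (simp add: mq_def mono_def[of "\<lambda>_. 0"])
  then show "(\<lambda>N. RN N x y / mq (\<lambda>p. if p = (x, y) then 1 else 0) (\<lambda>_. 0) N) \<longlonglongrightarrow> 1"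
    by (simp only:) (rule tendsto_const)
  show "int (deg (\<lambda>p. if p = (x, y) then 1 else 0)) - int (deg (\<lambda>_. 0)) = 1"
    using assms by (simp add: deg_def sum.delta)
qed (use G0_pos[OF assms] assms in \<open>auto simp: okk_def\<close>)

lemma tame_mult:
  assumes "tame d f" "tame e g"
  shows "tame (d + e) (\<lambda>N. f N * g N)"
proof -
  obtain k1 k2 c where k: "okk k1" "okk k2" "int (deg k1) - int (deg k2) = d" "c > 0"
    "(\<lambda>N. f N / mq k1 k2 N) \<longlonglongrightarrow> c" "\<And>N. f N > 0" by (rule tame_def2[OF assms(1)]) blast
  obtain k1' k2' c' where k': "okk k1'" "okk k2'" "int (deg k1') - int (deg k2') = e" "c' > 0"
    "(\<lambda>N. g N / mq k1' k2' N) \<longlonglongrightarrow> c'" "\<And>N. g N > 0" by (rule tame_def2[OF assms(2)]) blast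
  have eq: "f N * g N / mq (\<lambda>p. k1 p + k1' p) (\<lambda>p. k2 p + k2' p) N =
      (f N / mq k1 k2 N) * (g N / mq k1' k2' N)" for N
    unfolding mq_def mono_add using mono_pos[of k2 N] mono_pos[of k2' N] mono_pos[of k1' N] mono_pos[of k1 N]
    by (simp add: field_simps)
  have lim: "(\<lambda>N. f N * g N / mq (\<lambda>p. k1 p + k1' p) (\<lambda>p. k2 p + k2' p) N) \<longlonglongrightarrow> c * c'"
    unfolding eq by (intro tendsto_mult k(5) k'(5))
  show ?thesis
    apply (rule tameI[of _ "\<lambda>p. k1 p + k1' p" "\<lambda>p. k2 p + k2' p" _ "c * c'", OF _ _ _ _ _ lim])
    using k k' by (auto simp: okk_add deg_add)
qed

lemma tame_inv:
  assumes "tame d f"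
  shows "tame (- d) (\<lambda>N. 1 / f N)"
proof -
  obtain k1 k2 c where k: "okk k1" "okk k2" "int (deg k1) - int (deg k2) = d" "c > 0"
    "(\<lambda>N. f N / mq k1 k2 N) \<longlonglongrightarrow> c" "\<And>N. f N > 0" by (rule tame_def2[OF assms(1)]) blast
  have eq: "1 / f N / mq k2 k1 N = inverse (f N / mq k1 k2 N)" for N
    unfolding mq_def using mono_pos[of k2 N] mono_pos[of k1 N] k(6)[of N]
    by (simp add: field_simps)
  have lim: "(\<lambda>N. 1 / f N / mq k2 k1 N) \<longlonglongrightarrow> inverse c"
    unfolding eq using k by (intro tendsto_inverse) auto
  show ?thesis
    apply (rule tameI[of _ k2 k1 _ "inverse c", OF _ _ _ _ _ lim])
    using k by auto
qed

lemma tame_div: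
  assumes "tame d f" "tame e g"
  shows "tame (d - e) (\<lambda>N. f N / g N)"
  using tame_mult[OF assms(1) tame_inv[OF assms(2)]] by simp

lemma tame_add:
  assumes "tame d f" "tame d g"
  shows "tame d (\<lambda>N. f N + g N)"
proof -
  obtain k1 k2 c where k: "okk k1" "okk k2" "int (deg k1) - int (deg k2) = d" "c > 0"
    "(\<lambda>N. f N / mq k1 k2 N) \<longlonglongrightarrow> c" "\<And>N. f N > 0" by (rule tame_def2[OF assms(1)]) blast
  obtain k1' k2' c' where k': "okk k1'" "okk k2'" "int (deg k1') - int (deg k2') = d" "c' > 0"
    "(\<lambda>N. g N / mq k1' k2' N) \<longlonglongrightarrow> c'" "\<And>N. g N > 0" by (rule tame_def2[OF assms(2)]) blast
  have pos: "\<And>N. f N + g N > 0" using k(6) k'(6) by (simp add: add_pos_pos)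
  from cmp_mq[OF k(1,2) k'(1,2)] k(3) k'(3)
  consider (fin) L where "L \<ge> 0" "(\<lambda>N. mq k1 k2 N / mq k1' k2' N) \<longlonglongrightarrow> L"
    | (inf) "filterlim (\<lambda>N. mq k1 k2 N / mq k1' k2' N) at_top sequentially" by auto
  then show ?thesis
  proof cases
    case fin
    have eq: "(f N + g N) / mq k1' k2' N = (f N / mq k1 k2 N) * (mq k1 k2 N / mq k1' k2' N) + g N / mq k1' k2' N" for N
      using mq_pos[of k1 k2 N] mq_pos[of k1' k2' N] by (simp add: field_simps)
    have "(\<lambda>N. (f N + g N) / mq k1' k2' N) \<longlonglongrightarrow> c * L + c'"
      unfolding eq by (intro tendsto_add tendsto_mult k(5) k'(5) fin)
    moreover have "c * L + c' > 0" using fin k(4) k'(4) by (simp add: add_nonneg_pos)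
    ultimately show ?thesis using pos k' by (intro tameI[of _ k1' k2' _ "c * L + c'"]) auto
  next
    case inf
    have eq: "(f N + g N) / mq k1 k2 N = f N / mq k1 k2 N + (g N / mq k1' k2' N) * inverse (mq k1 k2 N / mq k1' k2' N)" for N
      using mq_pos[of k1 k2 N] mq_pos[of k1' k2' N] by (simp add: field_simps)
    have "(\<lambda>N. inverse (mq k1 k2 N / mq k1' k2' N)) \<longlonglongrightarrow> 0"
      by (rule tendsto_inverse_0_at_top[OF inf])
    then have "(\<lambda>N. (f N + g N) / mq k1 k2 N) \<longlonglongrightarrow> c + c' * 0"
      unfolding eq by (intro tendsto_add tendsto_mult k(5) k'(5))
    then show ?thesis using pos k by (intro tameI[of _ k1 k2 _ c]) auto
  qed
qed

lemma ZT_zero: "ZT d (\<lambda>N. 0)" unfolding ZT_def by simp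

lemma ZT_tame: "tame d f \<Longrightarrow> ZT d f" unfolding ZT_def by simp

lemma ZT_nonneg: "ZT d f \<Longrightarrow> f N \<ge> 0"
  unfolding ZT_def using tame_pos[of d f N] by (auto intro: less_imp_le)

lemma ZT_pos: "ZT d f \<Longrightarrow> f N > 0 \<Longrightarrow> tame d f"
  unfolding ZT_def by auto

lemma ZT_add: "ZT d f \<Longrightarrow> ZT d g \<Longrightarrow> ZT d (\<lambda>N. f N + g N)"
  unfolding ZT_def using tame_add by auto

lemma ZT_mult: "ZT d f \<Longrightarrow> ZT e g \<Longrightarrow> ZT (d + e) (\<lambda>N. f N * g N)"
  unfolding ZT_def using tame_mult by auto

lemma ZT_div: "ZT d f \<Longrightarrow> tame e g \<Longrightarrow> ZT (d - e) (\<lambda>N. f N / g N)"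
  unfolding ZT_def using tame_div by auto

lemma ZT_sum:
  assumes "finite S" "\<And>x. x \<in> S \<Longrightarrow> ZT d (f x)"
  shows "ZT d (\<lambda>N. \<Sum>x\<in>S. f x N)"
  using assms
proof (induction S rule: finite_induct)
  case empty
  then show ?case by (simp add: ZT_zero)
next
  case (insert x F)
  then show ?case using ZT_add[of d "f x" "\<lambda>N. \<Sum>x\<in>F. f x N"] by simp
qed

lemma ZT_rate:
  assumes "x \<noteq> y"
  shows "ZT 1 (\<lambda>N. RN N x y)"
proof (cases "(x, y) \<in> G0")
  case True
  then show ?thesis using tame_rate ZT_tame by blast
next
  case False
  then have "\<not> RN 0 x y > 0" using assms unfolding G0_def jump_graph_def by auto
  then have "\<forall>N. RN N x y = 0" using A1[OF assms] by auto
  then show ?thesis using ZT_zero by (metis ext)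
qed

lemma ZT_deg: "ZT d f \<Longrightarrow> d = e \<Longrightarrow> ZT e f" by simp

end


lemma sum_split_pt:
  fixes f :: "'a::finite \<Rightarrow> real"
  assumes "a \<noteq> b"
  shows "(\<Sum>y\<in>UNIV - {a}. f y) = f b + (\<Sum>y\<in>UNIV - {a} - {b}. f y)"
  using assms by (subst sum.remove[of _ b]) auto

lemma set_swap: "UNIV - {a} - {b} = UNIV - {b} - {a}" by auto

lemma harm_step:
  fixes r :: "'a::finite \<Rightarrow> 'a \<Rightarrow> real" and h' hh :: "'a \<Rightarrow> real"
  assumes xz: "x \<noteq> z" and lz: "hold_rate r z > 0"
    and IH: "hold_rate (\<lambda>a b. if a = z \<or> b = z then 0 else r a b + r a z * r z b / hold_rate r z) x * h' x
      = (\<Sum>y\<in>UNIV - {x}. (if x = z \<or> y = z then 0 else r x y + r x z * r z y / hold_rate r z) * h' y)"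
    and hz: "hh z = (\<Sum>y\<in>UNIV - {z}. r z y * h' y) / hold_rate r z"
    and hy: "\<And>y. y \<noteq> z \<Longrightarrow> hh y = h' y"
  shows "hold_rate r x * hh x = (\<Sum>y\<in>UNIV - {x}. r x y * hh y)"
proof -
  define U where "U = UNIV - {x} - {z}"
  define l where "l = hold_rate r z"
  define L1 where "L1 = (\<Sum>y\<in>U. r x y)"
  define L2 where "L2 = (\<Sum>y\<in>U. r z y)"
  define S1 where "S1 = (\<Sum>y\<in>U. r x y * h' y)"
  define S2 where "S2 = (\<Sum>y\<in>U. r z y * h' y)"
  have U2: "UNIV - {z} - {x} = U" unfolding U_def by auto
  have hx: "hh x = h' x" using hy xz by simp
  have l: "l = r z x + L2" unfolding l_def hold_rate_def L2_def
    using sum_split_pt[of z x "r z"] xz U2 by simp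
  have lx: "hold_rate r x = r x z + L1" unfolding hold_rate_def L1_def U_def
    using sum_split_pt[of x z "r x"] xz by simp
  have l'x: "hold_rate (\<lambda>a b. if a = z \<or> b = z then 0 else r a b + r a z * r z b / l) x
      = L1 + r x z * L2 / l"
  proof -
    have "hold_rate (\<lambda>a b. if a = z \<or> b = z then 0 else r a b + r a z * r z b / l) x
       = (\<Sum>y\<in>U. r x y + r x z * r z y / l)"
      unfolding hold_rate_def U_def
      using sum_split_pt[of x z "\<lambda>y. if x = z \<or> y = z then 0 else r x y + r x z * r z y / l"] xz
      by simp
    also have "\<dots> = L1 + r x z * L2 / l"
      unfolding L1_def L2_def by (simp add: sum.distrib sum_distrib_left sum_divide_distrib)
    finally show ?thesis .
  qed
  have rhs': "(\<Sum>y\<in>UNIV - {x}. (if x = z \<or> y = z then 0 else r x y + r x z * r z y / hold_rate r z) * h' y)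
      = S1 + r x z * S2 / l"
  proof -
    have "(\<Sum>y\<in>UNIV - {x}. (if x = z \<or> y = z then 0 else r x y + r x z * r z y / hold_rate r z) * h' y)
       = (\<Sum>y\<in>U. r x y * h' y + r x z * (r z y * h' y) / l)"
      unfolding U_def l_def
      using sum_split_pt[of x z "\<lambda>y. (if x = z \<or> y = z then 0 else r x y + r x z * r z y / hold_rate r z) * h' y"] xz
      by (simp add: algebra_simps)
    also have "\<dots> = S1 + r x z * S2 / l"
      unfolding S1_def S2_def by (simp add: sum.distrib sum_distrib_left sum_divide_distrib)
    finally show ?thesis .
  qed
  have hzl: "hh z * l = r z x * h' x + S2"
    unfolding hz l_def S2_def using sum_split_pt[of z x "\<lambda>y. r z y * h' y"] xz U2 lz by simp
  have rhs: "(\<Sum>y\<in>UNIV - {x}. r x y * hh y) = r x z * hh z + S1"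
    unfolding S1_def U_def using sum_split_pt[of x z "\<lambda>y. r x y * hh y"] xz hy by simp
  have lpos: "l > 0" using lz l_def by simp
  from IH have IH': "(L1 + r x z * L2 / l) * h' x = S1 + r x z * S2 / l"
    unfolding l_def[symmetric] by (simp only: l'x rhs'[unfolded l_def[symmetric]])
  have IH2: "L1 * l * h' x + r x z * L2 * h' x = S1 * l + r x z * S2"
    using IH' lpos by (simp add: field_simps)
  have "(r x z + L1) * h' x * l = (r x z * hh z + S1) * l"
  proof -
    have "(r x z + L1) * h' x * l = L1 * l * h' x + r x z * L2 * h' x + r x z * r z x * h' x"
      using l by (simp add: algebra_simps)
    also have "\<dots> = S1 * l + r x z * S2 + r x z * r z x * h' x" using IH2 by simp
    also have "\<dots> = S1 * l + r x z * (hh z * l)" using hzl by (simp add: algebra_simps)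
    also have "\<dots> = (r x z * hh z + S1) * l" by (simp add: algebra_simps)
    finally show ?thesis .
  qed
  then have "(r x z + L1) * h' x = r x z * hh z + S1" using lpos by simp
  then show ?thesis unfolding rhs lx hx .
qed


lemma inv_step:
  fixes r :: "'a::finite \<Rightarrow> 'a \<Rightarrow> real" and m' mm :: "'a \<Rightarrow> real"
  assumes yz: "y \<noteq> z" and lz: "hold_rate r z > 0"
    and IH: "(\<Sum>x\<in>UNIV - {y}. m' x * (if x = z \<or> y = z then 0 else r x y + r x z * r z y / hold_rate r z))
      = m' y * hold_rate (\<lambda>a b. if a = z \<or> b = z then 0 else r a b + r a z * r z b / hold_rate r z) y"
    and mz: "mm z = (\<Sum>x\<in>UNIV - {z}. m' x * r x z) / hold_rate r z"
    and my: "\<And>x. x \<noteq> z \<Longrightarrow> mm x = m' x"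
  shows "(\<Sum>x\<in>UNIV - {y}. mm x * r x y) = mm y * hold_rate r y"
proof -
  define U where "U = UNIV - {y} - {z}"
  define l where "l = hold_rate r z"
  define L1 where "L1 = (\<Sum>w\<in>U. r y w)"
  define L2 where "L2 = (\<Sum>w\<in>U. r z w)"
  define S1 where "S1 = (\<Sum>x\<in>U. m' x * r x y)"
  define S2 where "S2 = (\<Sum>x\<in>U. m' x * r x z)"
  have U2: "UNIV - {z} - {y} = U" unfolding U_def by auto
  have hy: "mm y = m' y" using my yz by simp
  have l: "l = r z y + L2" unfolding l_def hold_rate_def L2_def
    using sum_split_pt[of z y "r z"] yz U2 by simp
  have ly: "hold_rate r y = r y z + L1" unfolding hold_rate_def L1_def U_def
    using sum_split_pt[of y z "r y"] yz by simp
  have l'y: "hold_rate (\<lambda>a b. if a = z \<or> b = z then 0 else r a b + r a z * r z b / l) y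
      = L1 + r y z * L2 / l"
  proof -
    have "hold_rate (\<lambda>a b. if a = z \<or> b = z then 0 else r a b + r a z * r z b / l) y
       = (\<Sum>w\<in>U. r y w + r y z * r z w / l)"
      unfolding hold_rate_def U_def
      using sum_split_pt[of y z "\<lambda>w. if y = z \<or> w = z then 0 else r y w + r y z * r z w / l"] yz
      by simp
    also have "\<dots> = L1 + r y z * L2 / l"
      unfolding L1_def L2_def by (simp add: sum.distrib sum_distrib_left sum_divide_distrib)
    finally show ?thesis .
  qed
  have lhs': "(\<Sum>x\<in>UNIV - {y}. m' x * (if x = z \<or> y = z then 0 else r x y + r x z * r z y / l))
      = S1 + r z y * S2 / l"
  proof -
    have "(\<Sum>x\<in>UNIV - {y}. m' x * (if x = z \<or> y = z then 0 else r x y + r x z * r z y / l))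
       = (\<Sum>x\<in>U. m' x * r x y + r z y * (m' x * r x z) / l)"
      unfolding U_def
      using sum_split_pt[of y z "\<lambda>x. m' x * (if x = z \<or> y = z then 0 else r x y + r x z * r z y / l)"] yz
      by (simp add: algebra_simps)
    also have "\<dots> = S1 + r z y * S2 / l"
      unfolding S1_def S2_def by (simp add: sum.distrib sum_distrib_left sum_divide_distrib)
    finally show ?thesis .
  qed
  have mzl: "mm z * l = m' y * r y z + S2"
    unfolding mz l_def S2_def using sum_split_pt[of z y "\<lambda>x. m' x * r x z"] yz U2 lz by simp
  have lhs: "(\<Sum>x\<in>UNIV - {y}. mm x * r x y) = mm z * r z y + S1"
    unfolding S1_def U_def using sum_split_pt[of y z "\<lambda>x. mm x * r x y"] yz my by simp
  have lpos: "l > 0" using lz l_def by simp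
  from IH have IH': "S1 + r z y * S2 / l = m' y * (L1 + r y z * L2 / l)"
    unfolding l_def[symmetric] by (simp only: l'y lhs')
  have IH2: "S1 * l + r z y * S2 = m' y * (L1 * l + r y z * L2)"
    using IH' lpos by (simp add: field_simps)
  have "(mm z * r z y + S1) * l = m' y * (r y z + L1) * l"
  proof -
    have "(mm z * r z y + S1) * l = r z y * (mm z * l) + S1 * l" by (simp add: algebra_simps)
    also have "\<dots> = r z y * m' y * r y z + (S1 * l + r z y * S2)" using mzl by (simp add: algebra_simps)
    also have "\<dots> = r z y * m' y * r y z + m' y * (L1 * l + r y z * L2)" using IH2 by simp
    also have "\<dots> = m' y * (r y z + L1) * l" using l by (simp add: algebra_simps)
    finally show ?thesis .
  qed
  then have "mm z * r z y + S1 = m' y * (r y z + L1)" using lpos by simp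
  then show ?thesis unfolding lhs ly hy .
qed


context mt
begin

definition Rok :: "(nat \<Rightarrow> 'a \<Rightarrow> 'a \<Rightarrow> real) \<Rightarrow> bool" where
  "Rok R \<longleftrightarrow> (\<forall>N x y. R N x y \<ge> 0) \<and> (\<forall>x y. x \<noteq> y \<longrightarrow> ZT 1 (\<lambda>N. R N x y))"

definition GR :: "(nat \<Rightarrow> 'a \<Rightarrow> 'a \<Rightarrow> real) \<Rightarrow> ('a \<times> 'a) set" where
  "GR R = {(a, b). a \<noteq> b \<and> R 0 a b > 0}"

definition elim :: "(nat \<Rightarrow> 'a \<Rightarrow> 'a \<Rightarrow> real) \<Rightarrow> 'a \<Rightarrow> nat \<Rightarrow> 'a \<Rightarrow> 'a \<Rightarrow> real" where
  "elim R z = (\<lambda>N a b. if a = z \<or> b = z then 0 else R N a b + R N a z * R N z b / hold_rate (R N) z)"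

lemma Rok_nonneg: "Rok R \<Longrightarrow> R N x y \<ge> 0" unfolding Rok_def by blast
lemma Rok_ZT: "Rok R \<Longrightarrow> x \<noteq> y \<Longrightarrow> ZT 1 (\<lambda>N. R N x y)" unfolding Rok_def by blast

lemma Rok_GR: "Rok R \<Longrightarrow> (a, b) \<in> GR R \<Longrightarrow> R N a b > 0"
  unfolding GR_def using Rok_ZT[of R a b] by (auto simp: ZT_def tame_def dest: fun_cong[of _ _ 0])

lemma hold_nonneg: "Rok R \<Longrightarrow> hold_rate (R N) z \<ge> 0"
  unfolding hold_rate_def by (auto intro: sum_nonneg Rok_nonneg)

lemma hold_ge: "Rok R \<Longrightarrow> w \<noteq> z \<Longrightarrow> R N z w \<le> hold_rate (R N) z"
  unfolding hold_rate_def by (rule member_le_sum) (auto intro: Rok_nonneg)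

lemma hold_pos: "Rok R \<Longrightarrow> (z, w) \<in> GR R \<Longrightarrow> hold_rate (R N) z > 0"
  using hold_ge[of R w z N] Rok_GR[of R z w N] by (auto simp: GR_def)

lemma hold_tame: "Rok R \<Longrightarrow> (z, w) \<in> GR R \<Longrightarrow> tame 1 (\<lambda>N. hold_rate (R N) z)"
proof -
  assume R: "Rok R" and zw: "(z, w) \<in> GR R"
  have "ZT 1 (\<lambda>N. \<Sum>y\<in>UNIV - {z}. R N z y)" by (rule ZT_sum) (auto intro: Rok_ZT[OF R])
  then have "ZT 1 (\<lambda>N. hold_rate (R N) z)" unfolding hold_rate_def .
  then show ?thesis using hold_pos[OF R zw, of 0] ZT_pos by blast
qed

lemma Rok_elim:
  assumes R: "Rok R" and zw: "(z, w) \<in> GR R"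
  shows "Rok (elim R z)"
  unfolding Rok_def
proof (intro conjI allI impI)
  fix N x y
  show "elim R z N x y \<ge> 0" unfolding elim_def
    using Rok_nonneg[OF R] hold_pos[OF R zw, of N] by (auto intro!: add_nonneg_nonneg divide_nonneg_pos)
next
  fix x y :: 'a assume xy: "x \<noteq> y"
  show "ZT 1 (\<lambda>N. elim R z N x y)"
  proof (cases "x = z \<or> y = z")
    case True
    then show ?thesis unfolding elim_def by (simp add: ZT_zero)
  next
    case False
    have "ZT ((1 + 1) - 1) (\<lambda>N. R N x z * R N z y / hold_rate (R N) z)"
      using False by (intro ZT_div ZT_mult Rok_ZT[OF R] hold_tame[OF R zw]) auto
    then have "ZT 1 (\<lambda>N. R N x y + R N x z * R N z y / hold_rate (R N) z)"
      using ZT_add[OF Rok_ZT[OF R xy]] by simp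
    then show ?thesis using False unfolding elim_def by simp
  qed
qed

lemma elim_ge:
  assumes R: "Rok R" and zw: "(z, w) \<in> GR R" and "a \<noteq> z" "b \<noteq> z"
  shows "elim R z N a b \<ge> R N a b" and "elim R z N a b \<ge> R N a z * R N z b / hold_rate (R N) z"
  using assms Rok_nonneg[OF R] hold_pos[OF R zw, of N]
  by (auto simp: elim_def intro!: divide_nonneg_pos)

lemma path_elim:
  assumes R: "Rok R" and zw: "(z, w0) \<in> GR R"
    and path: "(x, y) \<in> (GR R)\<^sup>*" and yz: "y \<noteq> z" and xz: "x \<noteq> z"
  shows "(x, y) \<in> (GR (elim R z))\<^sup>*"
proof -
  let ?R' = "elim R z"
  have edge1: "(a, b) \<in> GR ?R'" if "(a, b) \<in> GR R" "a \<noteq> z" "b \<noteq> z" for a b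
    using that elim_ge(1)[OF R zw, of a b 0] unfolding GR_def by auto
  have edge2: "(a, b) \<in> GR ?R'" if "(a, z) \<in> GR R" "(z, b) \<in> GR R" "a \<noteq> b" for a b
  proof -
    have "a \<noteq> z" "b \<noteq> z" using that unfolding GR_def by auto
    have "R 0 a z * R 0 z b / hold_rate (R 0) z > 0"
      using that Rok_GR[OF R] hold_pos[OF R zw] by (auto intro!: divide_pos_pos mult_pos_pos)
    then show ?thesis using elim_ge(2)[OF R zw \<open>a \<noteq> z\<close> \<open>b \<noteq> z\<close>, of 0] that unfolding GR_def by auto
  qed
  have "(u \<noteq> z \<longrightarrow> (u, y) \<in> (GR ?R')\<^sup>*) \<and> (u = z \<longrightarrow> (\<exists>w. (z, w) \<in> GR R \<and> (w, y) \<in> (GR ?R')\<^sup>*))"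
    if "(u, y) \<in> (GR R)\<^sup>*" for u
    using that
  proof (induction rule: converse_rtrancl_induct)
    case base
    then show ?case using yz by auto
  next
    case (step u v)
    have uv: "u \<noteq> v" using step.hyps(1) unfolding GR_def by auto
    show ?case
    proof (intro conjI impI)
      assume uz: "u \<noteq> z"
      show "(u, y) \<in> (GR ?R')\<^sup>*"
      proof (cases "v = z")
        case False
        then show ?thesis using step edge1 uz by (meson converse_rtrancl_into_rtrancl)
      next
        case True
        then obtain w where w: "(z, w) \<in> GR R" "(w, y) \<in> (GR ?R')\<^sup>*" using step by auto
        show ?thesis
        proof (cases "u = w")
          case True then show ?thesis using w by simp
        next
          case False
          then have "(u, w) \<in> GR ?R'" using edge2 step.hyps(1) True w by auto
          then show ?thesis using w by (meson converse_rtrancl_into_rtrancl)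
        qed
      qed
    next
      assume uz: "u = z"
      then have "v \<noteq> z" using uv by simp
      then show "\<exists>w. (z, w) \<in> GR R \<and> (w, y) \<in> (GR ?R')\<^sup>*" using step uz by auto
    qed
  qed
  then show ?thesis using path xz by blast
qed

lemma first_edge:
  assumes "(z, y) \<in> (GR R)\<^sup>*" "y \<noteq> z"
  shows "\<exists>w. (z, w) \<in> GR R"
  using assms by (metis converse_rtranclE)

lemma last_edge:
  assumes "(x, z) \<in> (GR R)\<^sup>*" "x \<noteq> z"
  shows "\<exists>w. (x, w) \<in> (GR R)\<^sup>* \<and> (w, z) \<in> GR R"
  using assms by (metis rtranclE)

end


context mt
begin

lemma harm_exist:
  fixes D :: "'a set"
  shows "\<forall>R b. Rok R \<longrightarrow> (\<forall>x\<in>D. \<exists>y. y \<notin> D \<and> (x, y) \<in> (GR R)\<^sup>*) \<longrightarrow> (\<forall>x. x \<notin> D \<longrightarrow> ZT 0 (b x)) \<longrightarrow>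
    (\<exists>h. (\<forall>x. x \<notin> D \<longrightarrow> h x = b x) \<and> (\<forall>x. ZT 0 (h x)) \<and>
       (\<forall>N. \<forall>x\<in>D. hold_rate (R N) x * h x N = (\<Sum>y\<in>UNIV - {x}. R N x y * h y N)))"
proof -
  have "finite D" by simp
  then show ?thesis
  proof (induction D rule: finite_induct)
    case empty
    then show ?case by auto
  next
    case (insert z D')
    show ?case
    proof (intro allI impI)
      fix R b
      assume R: "Rok R" and reach: "\<forall>x\<in>insert z D'. \<exists>y. y \<notin> insert z D' \<and> (x, y) \<in> (GR R)\<^sup>*"
        and bZT: "\<forall>x. x \<notin> insert z D' \<longrightarrow> ZT 0 (b x)"
      obtain y0 where y0: "y0 \<notin> insert z D'" "(z, y0) \<in> (GR R)\<^sup>*" using reach by auto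
      obtain w where zw: "(z, w) \<in> GR R" using first_edge[OF y0(2)] y0(1) by auto
      define R' where "R' = elim R z"
      have R': "Rok R'" unfolding R'_def by (rule Rok_elim[OF R zw])
      have reach': "\<forall>x\<in>D'. \<exists>y. y \<notin> D' \<and> (x, y) \<in> (GR R')\<^sup>*"
      proof
        fix x assume x: "x \<in> D'"
        obtain y where y: "y \<notin> insert z D'" "(x, y) \<in> (GR R)\<^sup>*" using reach x by auto
        have "(x, y) \<in> (GR R')\<^sup>*" unfolding R'_def
          by (rule path_elim[OF R zw y(2)]) (use y x insert.hyps in auto)
        then show "\<exists>y. y \<notin> D' \<and> (x, y) \<in> (GR R')\<^sup>*" using y by auto
      qed
      define b' where "b' = b(z := (\<lambda>N. 0))"
      have b'ZT: "\<forall>x. x \<notin> D' \<longrightarrow> ZT 0 (b' x)" using bZT unfolding b'_def by (auto simp: ZT_zero)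
      obtain h' where h': "\<forall>x. x \<notin> D' \<longrightarrow> h' x = b' x" "\<forall>x. ZT 0 (h' x)"
        "\<forall>N. \<forall>x\<in>D'. hold_rate (R' N) x * h' x N = (\<Sum>y\<in>UNIV - {x}. R' N x y * h' y N)"
        using insert.IH R' reach' b'ZT by blast
      define h where "h = h'(z := (\<lambda>N. (\<Sum>y\<in>UNIV - {z}. R N z y * h' y N) / hold_rate (R N) z))"
      show "\<exists>h. (\<forall>x. x \<notin> insert z D' \<longrightarrow> h x = b x) \<and> (\<forall>x. ZT 0 (h x)) \<and>
       (\<forall>N. \<forall>x\<in>insert z D'. hold_rate (R N) x * h x N = (\<Sum>y\<in>UNIV - {x}. R N x y * h y N))"
      proof (intro exI[of _ h] conjI allI impI ballI)
        fix x assume "x \<notin> insert z D'"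
        then show "h x = b x" using h'(1) unfolding h_def b'_def by auto
      next
        fix x
        show "ZT 0 (h x)"
        proof (cases "x = z")
          case True
          have "ZT ((1 + 0) - 1) (\<lambda>N. (\<Sum>y\<in>UNIV - {z}. R N z y * h' y N) / hold_rate (R N) z)"
            by (intro ZT_div ZT_sum ZT_mult Rok_ZT[OF R] hold_tame[OF R zw] h'(2)[rule_format]) auto
          then show ?thesis using True unfolding h_def by simp
        next
          case False
          then show ?thesis using h'(2) unfolding h_def by simp
        qed
      next
        fix N x assume x: "x \<in> insert z D'"
        have lz: "hold_rate (R N) z > 0" by (rule hold_pos[OF R zw])
        show "hold_rate (R N) x * h x N = (\<Sum>y\<in>UNIV - {x}. R N x y * h y N)"
        proof (cases "x = z")
          case True
          have "(\<Sum>y\<in>UNIV - {x}. R N x y * h y N) = (\<Sum>y\<in>UNIV - {z}. R N z y * h' y N)"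
            using True unfolding h_def by (intro sum.cong) auto
          then show ?thesis using True lz unfolding h_def by simp
        next
          case False
          then have xD: "x \<in> D'" using x by simp
          have IH: "hold_rate (R' N) x * h' x N = (\<Sum>y\<in>UNIV - {x}. R' N x y * h' y N)"
            using h'(3) xD by blast
          show ?thesis
            by (rule harm_step[of x z "R N" "\<lambda>y. h' y N" "\<lambda>y. h y N"])
               (use False lz IH in \<open>auto simp: R'_def elim_def h_def\<close>)
        qed
      qed
    qed
  qed
qed

lemma inv_exist:
  fixes S :: "'a set"
  assumes "S \<noteq> {}"
  shows "\<forall>R. Rok R \<longrightarrow> (\<forall>N x y. (x \<notin> S \<or> y \<notin> S) \<longrightarrow> R N x y = 0) \<longrightarrow>
    (\<forall>x\<in>S. \<forall>y\<in>S. (x, y) \<in> (GR R)\<^sup>*) \<longrightarrow>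
    (\<exists>m. (\<forall>x\<in>S. tame 0 (m x)) \<and> (\<forall>x. x \<notin> S \<longrightarrow> m x = (\<lambda>N. 0)) \<and>
       (\<forall>N y. (\<Sum>x\<in>UNIV - {y}. m x N * R N x y) = m y N * hold_rate (R N) y))"
proof -
  have "finite S" by simp
  then show ?thesis using assms
  proof (induction S rule: finite_ne_induct)
    case (singleton s)
    show ?case
    proof (intro allI impI)
      fix R assume R: "Rok R" and zero: "\<forall>N x y. (x \<notin> {s} \<or> y \<notin> {s}) \<longrightarrow> R N x y = 0"
      define m where "m = (\<lambda>x. if x = s then (\<lambda>N::nat. 1::real) else (\<lambda>N. 0))"
      have z: "R N x y = 0" if "x \<noteq> y" for N x y using that zero[rule_format, of x y N] by auto
      show "\<exists>m. (\<forall>x\<in>{s}. tame 0 (m x)) \<and> (\<forall>x. x \<notin> {s} \<longrightarrow> m x = (\<lambda>N. 0)) \<and>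
       (\<forall>N y. (\<Sum>x\<in>UNIV - {y}. m x N * R N x y) = m y N * hold_rate (R N) y)"
        by (intro exI[of _ m]) (auto simp: m_def tame_one hold_rate_def z)
    qed
  next
    case (insert z F)
    show ?case
    proof (intro allI impI)
      fix R
      assume R: "Rok R" and zero: "\<forall>N x y. (x \<notin> insert z F \<or> y \<notin> insert z F) \<longrightarrow> R N x y = 0"
        and conn: "\<forall>x\<in>insert z F. \<forall>y\<in>insert z F. (x, y) \<in> (GR R)\<^sup>*"
      obtain s where s: "s \<in> F" using insert.hyps by auto
      have sz: "s \<noteq> z" using s insert.hyps by auto
      obtain w where zw: "(z, w) \<in> GR R" using first_edge[of z s R] conn s sz by auto
      define R' where "R' = elim R z"
      have R': "Rok R'" unfolding R'_def by (rule Rok_elim[OF R zw])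
      have zero': "\<forall>N x y. (x \<notin> F \<or> y \<notin> F) \<longrightarrow> R' N x y = 0"
        using zero unfolding R'_def elim_def by auto
      have conn': "\<forall>x\<in>F. \<forall>y\<in>F. (x, y) \<in> (GR R')\<^sup>*"
      proof (intro ballI)
        fix x y assume "x \<in> F" "y \<in> F"
        then show "(x, y) \<in> (GR R')\<^sup>*" unfolding R'_def
          using path_elim[OF R zw, of x y] conn insert.hyps by auto
      qed
      obtain m' where m': "\<forall>x\<in>F. tame 0 (m' x)" "\<forall>x. x \<notin> F \<longrightarrow> m' x = (\<lambda>N. 0)"
        "\<forall>N y. (\<Sum>x\<in>UNIV - {y}. m' x N * R' N x y) = m' y N * hold_rate (R' N) y"
        using insert.IH R' zero' conn' by blast
      have m'ZT: "ZT 0 (m' x)" for x using m'(1,2) by (cases "x \<in> F") (auto simp: ZT_tame ZT_zero)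
      define m where "m = m'(z := (\<lambda>N. (\<Sum>x\<in>UNIV - {z}. m' x N * R N x z) / hold_rate (R N) z))"
      have mzt: "tame 0 (m z)"
      proof -
        have "ZT ((0 + 1) - 1) (\<lambda>N. (\<Sum>x\<in>UNIV - {z}. m' x N * R N x z) / hold_rate (R N) z)"
          by (intro ZT_div ZT_sum ZT_mult Rok_ZT[OF R] hold_tame[OF R zw] m'ZT) auto
        then have zt: "ZT 0 (m z)" unfolding m_def by simp
        obtain v where v: "(s, v) \<in> (GR R)\<^sup>*" "(v, z) \<in> GR R"
          using last_edge[of s z R] conn s sz by auto
        have vz: "v \<noteq> z" using v(2) unfolding GR_def by auto
        have Rv: "R 0 v z > 0" using v(2) unfolding GR_def by auto
        then have "v \<in> F" using zero vz by (metis insertE less_irrefl)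
        then have "m' v 0 > 0" using m'(1) tame_pos by blast
        then have "(\<Sum>x\<in>UNIV - {z}. m' x 0 * R 0 x z) > 0"
          using Rv vz by (intro sum_pos2[of _ v]) (auto intro: mult_nonneg_nonneg ZT_nonneg[OF m'ZT] Rok_nonneg[OF R])
        then have "m z 0 > 0" unfolding m_def using hold_pos[OF R zw, of 0] by simp
        then show ?thesis using zt ZT_pos by blast
      qed
      show "\<exists>m. (\<forall>x\<in>insert z F. tame 0 (m x)) \<and> (\<forall>x. x \<notin> insert z F \<longrightarrow> m x = (\<lambda>N. 0)) \<and>
       (\<forall>N y. (\<Sum>x\<in>UNIV - {y}. m x N * R N x y) = m y N * hold_rate (R N) y)"
      proof (intro exI[of _ m] conjI allI impI ballI)
        fix x assume "x \<in> insert z F"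
        then show "tame 0 (m x)" using mzt m'(1) unfolding m_def by (cases "x = z") auto
      next
        fix x assume "x \<notin> insert z F"
        then show "m x = (\<lambda>N. 0)" using m'(2) unfolding m_def by auto
      next
        fix N y
        have lz: "hold_rate (R N) z > 0" by (rule hold_pos[OF R zw])
        show "(\<Sum>x\<in>UNIV - {y}. m x N * R N x y) = m y N * hold_rate (R N) y"
        proof (cases "y = z")
          case True
          have "(\<Sum>x\<in>UNIV - {y}. m x N * R N x y) = (\<Sum>x\<in>UNIV - {z}. m' x N * R N x z)"
            using True unfolding m_def by (intro sum.cong) auto
          then show ?thesis using True lz unfolding m_def by simp
        next
          case False
          have IH: "(\<Sum>x\<in>UNIV - {y}. m' x N * R' N x y) = m' y N * hold_rate (R' N) y"
            using m'(3) by blast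
          show ?thesis
            by (rule inv_step[of y z "R N" "\<lambda>x. m' x N" "\<lambda>x. m x N"])
               (use False lz IH in \<open>auto simp: R'_def elim_def m_def\<close>)
        qed
      qed
    qed
  qed
qed

end


lemma sum_minus_pt:
  fixes f :: "'a::finite \<Rightarrow> real"
  shows "(\<Sum>y\<in>UNIV - {x}. f y) = (\<Sum>y\<in>UNIV. if y = x then 0 else f y)"
proof -
  have "(\<Sum>y\<in>UNIV. if y = x then 0 else f y) = (\<Sum>y\<in>UNIV - {x}. if y = x then 0 else f y)"
    using sum.remove[of UNIV x "\<lambda>y. if y = x then 0 else f y"] by simp
  also have "\<dots> = (\<Sum>y\<in>UNIV - {x}. f y)" by (rule sum.cong) auto
  finally show ?thesis by simp
qed

lemma hold_rate_nonneg: "(\<And>x y. r x y \<ge> (0::real)) \<Longrightarrow> hold_rate r x \<ge> 0"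
  unfolding hold_rate_def by (simp add: sum_nonneg)

lemma hold_jump:
  fixes r :: "'a::finite \<Rightarrow> 'a \<Rightarrow> real"
  assumes nn: "\<And>x y. r x y \<ge> 0"
  shows "hold_rate r x * jump_prob r x y = (if x = y then 0 else r x y)"
proof (cases "hold_rate r x = 0")
  case True
  then have "\<forall>y\<in>UNIV - {x}. r x y = 0" unfolding hold_rate_def
    using sum_nonneg_eq_0_iff[of "UNIV - {x}" "r x"] nn by auto
  then show ?thesis using True by (auto simp: jump_prob_def)
qed (simp add: jump_prob_def)

lemma jump_nonneg: "(\<And>x y. r x y \<ge> (0::real)) \<Longrightarrow> jump_prob r x y \<ge> 0"
  unfolding jump_prob_def using hold_rate_nonneg[of r x] by auto

lemma jump_sum_le:
  fixes r :: "'a::finite \<Rightarrow> 'a \<Rightarrow> real"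
  assumes nn: "\<And>x y. r x y \<ge> 0"
  shows "(\<Sum>y\<in>UNIV. jump_prob r x y) \<le> 1"
proof (cases "hold_rate r x = 0")
  case True
  then have "\<forall>y. jump_prob r x y = 0" by (simp add: jump_prob_def)
  then show ?thesis by simp
next
  case False
  have "(\<Sum>y\<in>UNIV. jump_prob r x y) = (\<Sum>y\<in>UNIV - {x}. r x y) / hold_rate r x"
    unfolding sum_minus_pt jump_prob_def sum_divide_distrib by (intro sum.cong) auto
  also have "\<dots> = 1" using False unfolding hold_rate_def by simp
  finally show ?thesis by simp
qed

lemma inv_unique:
  fixes r :: "'a::finite \<Rightarrow> 'a \<Rightarrow> real"
  assumes nn: "\<And>x y. r x y \<ge> 0" and irr: "\<And>x y. (x, y) \<in> (jump_graph r)\<^sup>*"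
    and m1: "invariant_prob r m1" and m2: "invariant_prob r m2"
  shows "m1 = m2"
proof -
  define v where "v x = m1 x - m2 x" for x
  have veq: "(\<Sum>x\<in>UNIV - {y}. v x * r x y) = v y * hold_rate r y" for y
    using m1 m2 unfolding invariant_prob_def v_def
    by (simp add: left_diff_distrib sum_subtractf)
  have vsum: "sum v UNIV = 0" using m1 m2 unfolding invariant_prob_def v_def by (simp add: sum_subtractf)
  define p where "p x = max (v x) 0" for x
  have pnn: "p x \<ge> 0" for x unfolding p_def by simp
  have ineq: "(\<Sum>x\<in>UNIV - {y}. p x * r x y) \<ge> p y * hold_rate r y" for y
  proof (cases "v y \<le> 0")
    case True
    then show ?thesis unfolding p_def by (auto intro!: sum_nonneg mult_nonneg_nonneg nn)
  next
    case False
    then have "p y * hold_rate r y = (\<Sum>x\<in>UNIV - {y}. v x * r x y)" using veq unfolding p_def by simp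
    also have "\<dots> \<le> (\<Sum>x\<in>UNIV - {y}. p x * r x y)"
      by (intro sum_mono mult_right_mono nn) (simp add: p_def)
    finally show ?thesis .
  qed
  have tot: "(\<Sum>y\<in>UNIV. \<Sum>x\<in>UNIV - {y}. p x * r x y) = (\<Sum>y\<in>UNIV. p y * hold_rate r y)"
  proof -
    have "(\<Sum>y\<in>UNIV. \<Sum>x\<in>UNIV - {y}. p x * r x y) = (\<Sum>y\<in>UNIV. \<Sum>x\<in>UNIV. if x = y then 0 else p x * r x y)"
      unfolding sum_minus_pt by simp
    also have "\<dots> = (\<Sum>x\<in>UNIV. \<Sum>y\<in>UNIV. if x = y then 0 else p x * r x y)" by (rule sum.swap)
    also have "\<dots> = (\<Sum>x\<in>UNIV. p x * hold_rate r x)"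
      unfolding hold_rate_def sum_minus_pt sum_distrib_left by (intro sum.cong) auto
    finally show ?thesis .
  qed
  have peq: "(\<Sum>x\<in>UNIV - {y}. p x * r x y) = p y * hold_rate r y" for y
  proof -
    have "(\<Sum>y\<in>UNIV. (\<Sum>x\<in>UNIV - {y}. p x * r x y) - p y * hold_rate r y) = 0"
      using tot by (simp add: sum_subtractf)
    then have "\<forall>y\<in>UNIV. (\<Sum>x\<in>UNIV - {y}. p x * r x y) - p y * hold_rate r y = 0"
      using ineq by (subst sum_nonneg_eq_0_iff[symmetric]) auto
    then show ?thesis by auto
  qed
  have bk: "p x = 0" if "(x, y) \<in> jump_graph r" "p y = 0" for x y
  proof -
    have "(\<Sum>x\<in>UNIV - {y}. p x * r x y) = 0" using peq[of y] that by simp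
    then have "\<forall>x\<in>UNIV - {y}. p x * r x y = 0"
      by (subst sum_nonneg_eq_0_iff[symmetric]) (auto intro: mult_nonneg_nonneg pnn nn)
    then show ?thesis using that(1) unfolding jump_graph_def by auto
  qed
  have bk2: "p y = 0 \<longrightarrow> p x = 0" if "(x, y) \<in> (jump_graph r)\<^sup>*" for x y
    using that
  proof (induction rule: converse_rtrancl_induct)
    case base then show ?case by simp
  next
    case (step u w) then show ?case using bk by blast
  qed
  show ?thesis
  proof (cases "\<exists>y. p y = 0")
    case True
    then obtain y where "p y = 0" by blast
    then have "\<forall>x. p x = 0" using bk2 irr by blast
    moreover have "v x \<le> p x" for x unfolding p_def by simp
    ultimately have "\<forall>x. - v x \<ge> 0" by (metis neg_0_le_iff_le)
    moreover have "sum (\<lambda>x. - v x) UNIV = 0" using vsum by (simp add: sum_negf)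
    ultimately have "\<forall>x. v x = 0" using sum_nonneg_eq_0_iff[of UNIV "\<lambda>x. - v x"] by auto
    then show ?thesis unfolding v_def by auto
  next
    case False
    have "v x > 0" for x
    proof (rule ccontr)
      assume "\<not> v x > 0"
      then have "p x = 0" unfolding p_def by simp
      then show False using False by blast
    qed
    then have "\<forall>x. v x > 0" by blast
    then have "sum v UNIV > 0" by (intro sum_pos) auto
    then show ?thesis using vsum by simp
  qed
qed

lemma harm_unique:
  fixes r :: "'a::finite \<Rightarrow> 'a \<Rightarrow> real"
  assumes nn: "\<And>x y. r x y \<ge> 0"
    and reach: "\<forall>x\<in>D. \<exists>y. y \<notin> D \<and> (x, y) \<in> (jump_graph r)\<^sup>*"
    and eqo: "\<And>x. x \<notin> D \<Longrightarrow> u x = v x"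
    and hu: "\<And>x. x \<in> D \<Longrightarrow> hold_rate r x * u x = (\<Sum>y\<in>UNIV - {x}. r x y * u y)"
    and hv: "\<And>x. x \<in> D \<Longrightarrow> hold_rate r x * v x = (\<Sum>y\<in>UNIV - {x}. r x y * v y)"
  shows "u = v"
proof (rule ccontr)
  assume ne: "u \<noteq> v"
  define w where "w x = u x - v x" for x
  have w0: "w x = 0" if "x \<notin> D" for x using eqo that unfolding w_def by simp
  have wh: "hold_rate r x * w x = (\<Sum>y\<in>UNIV - {x}. r x y * w y)" if "x \<in> D" for x
    using hu[OF that] hv[OF that] unfolding w_def by (simp add: right_diff_distrib sum_subtractf)
  define M where "M = Max (range (\<lambda>x. \<bar>w x\<bar>))"
  have Mge: "\<bar>w x\<bar> \<le> M" for x unfolding M_def by (rule Max_ge) auto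
  have "M \<in> range (\<lambda>x. \<bar>w x\<bar>)" unfolding M_def by (rule Max_in) auto
  then obtain x0 where x0: "\<bar>w x0\<bar> = M" by auto
  have Mpos: "M > 0"
  proof -
    obtain x where "u x \<noteq> v x" using ne by auto
    then have "\<bar>w x\<bar> > 0" unfolding w_def by simp
    then show ?thesis using Mge[of x] by simp
  qed
  have stp: "\<bar>w y\<bar> = M" if "\<bar>w x\<bar> = M" "(x, y) \<in> jump_graph r" for x y
  proof -
    have xD: "x \<in> D" using that w0 Mpos by force
    have "hold_rate r x * M = \<bar>hold_rate r x * w x\<bar>" using that(1) hold_rate_nonneg[of r x, OF nn] by (simp add: abs_mult)
    also have "\<dots> = \<bar>\<Sum>y\<in>UNIV - {x}. r x y * w y\<bar>" using wh[OF xD] by simp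
    also have "\<dots> \<le> (\<Sum>y\<in>UNIV - {x}. r x y * \<bar>w y\<bar>)"
      by (rule order_trans[OF sum_abs]) (simp add: abs_mult nn)
    finally have le: "hold_rate r x * M \<le> (\<Sum>y\<in>UNIV - {x}. r x y * \<bar>w y\<bar>)" .
    have "(\<Sum>y\<in>UNIV - {x}. r x y * (M - \<bar>w y\<bar>)) = hold_rate r x * M - (\<Sum>y\<in>UNIV - {x}. r x y * \<bar>w y\<bar>)"
      unfolding hold_rate_def by (simp add: right_diff_distrib sum_subtractf sum_distrib_right)
    then have "(\<Sum>y\<in>UNIV - {x}. r x y * (M - \<bar>w y\<bar>)) \<le> 0" using le by simp
    moreover have nn2: "\<forall>y\<in>UNIV - {x}. r x y * (M - \<bar>w y\<bar>) \<ge> 0" using Mge nn by (simp add: mult_nonneg_nonneg)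
    ultimately have s0: "(\<Sum>y\<in>UNIV - {x}. r x y * (M - \<bar>w y\<bar>)) = 0"
      by (meson antisym sum_nonneg)
    have iff: "((\<Sum>y\<in>UNIV - {x}. r x y * (M - \<bar>w y\<bar>)) = 0) = (\<forall>y\<in>UNIV - {x}. r x y * (M - \<bar>w y\<bar>) = 0)"
      by (rule sum_nonneg_eq_0_iff) (use nn2 in auto)
    have all0: "\<forall>y\<in>UNIV - {x}. r x y * (M - \<bar>w y\<bar>) = 0" using iff s0 by blast
    have yx: "y \<in> UNIV - {x}" and pos: "r x y > 0" using that(2) unfolding jump_graph_def by auto
    have "r x y * (M - \<bar>w y\<bar>) = 0" using all0 yx by blast
    then show ?thesis using pos by simp
  qed
  have prp: "\<bar>w y\<bar> = M" if "(x0, y) \<in> (jump_graph r)\<^sup>*" for y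
    using that
  proof (induction rule: rtrancl_induct)
    case base then show ?case using x0 .
  next
    case (step y z) then show ?case using stp by blast
  qed
  have "x0 \<in> D" using x0 w0 Mpos by force
  then obtain y where "y \<notin> D" "(x0, y) \<in> (jump_graph r)\<^sup>*" using reach by auto
  then show False using prp w0 Mpos by fastforce
qed


definition Lk :: "'a set \<Rightarrow> 'a set \<Rightarrow> nat \<Rightarrow> 'a list set" where
  "Lk A B k = {xs. length xs = Suc k \<and> last xs \<in> B - A \<and> (\<forall>i<k. xs ! i \<notin> A \<union> B)}"

definition Tk :: "('a::finite \<Rightarrow> 'a \<Rightarrow> real) \<Rightarrow> 'a set \<Rightarrow> 'a set \<Rightarrow> nat \<Rightarrow> 'a \<Rightarrow> real" where
  "Tk r A B k x = (\<Sum>xs\<in>Lk A B k. path_weight (jump_prob r) x xs)"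

lemma escape_Tk: "escape_prob r A B x = (if x \<in> B then 1 else (\<Sum>k. Tk r A B k x))"
  unfolding escape_prob_def Tk_def Lk_def by simp

lemma finite_Lk: "finite (Lk A B k :: ('a::finite) list set)"
proof -
  have "Lk A B k \<subseteq> {xs. set xs \<subseteq> (UNIV::'a set) \<and> length xs = Suc k}" unfolding Lk_def by auto
  then show ?thesis by (rule finite_subset) (rule finite_lists_length_eq, simp)
qed

lemma Lk0: "Lk A B 0 = (\<lambda>y. [y]) ` (B - A)"
proof (intro set_eqI iffI)
  fix xs assume "xs \<in> Lk A B 0"
  then have "length xs = 1" "last xs \<in> B - A" unfolding Lk_def by auto
  then show "xs \<in> (\<lambda>y. [y]) ` (B - A)"
    by (cases xs) auto
qed (auto simp: Lk_def)

lemma LkSuc: "Lk A B (Suc k) = (\<lambda>(y, ys). y # ys) ` ((UNIV - (A \<union> B)) \<times> Lk A B k)"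
proof (intro set_eqI iffI)
  fix xs assume xs: "xs \<in> Lk A B (Suc k)"
  then obtain y ys where yys: "xs = y # ys" unfolding Lk_def by (cases xs) auto
  have all: "\<forall>i<Suc k. xs ! i \<notin> A \<union> B" using xs unfolding Lk_def by blast
  have "y \<notin> A \<union> B" using all[rule_format, of 0] yys by simp
  moreover have "ys \<in> Lk A B k"
  proof -
    have l: "length ys = Suc k" using xs yys unfolding Lk_def by auto
    then have "ys \<noteq> []" by auto
    then have "last ys = last xs" using yys by simp
    moreover have "\<forall>i<k. ys ! i \<notin> A \<union> B"
    proof (intro allI impI)
      fix i assume "i < k"
      then have "xs ! Suc i \<notin> A \<union> B" using all by blast
      then show "ys ! i \<notin> A \<union> B" using yys by simp
    qed
    ultimately show ?thesis using l xs unfolding Lk_def by auto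
  qed
  ultimately show "xs \<in> (\<lambda>(y, ys). y # ys) ` ((UNIV - (A \<union> B)) \<times> Lk A B k)"
    using yys by auto
next
  fix xs assume "xs \<in> (\<lambda>(y, ys). y # ys) ` ((UNIV - (A \<union> B)) \<times> Lk A B k)"
  then obtain y ys where yys: "xs = y # ys" "y \<notin> A \<union> B" "ys \<in> Lk A B k" by auto
  have l: "length ys = Suc k" using yys unfolding Lk_def by auto
  then have "ys \<noteq> []" by auto
  have "\<forall>i<Suc k. xs ! i \<notin> A \<union> B"
  proof (intro allI impI)
    fix i assume i: "i < Suc k"
    show "xs ! i \<notin> A \<union> B"
    proof (cases i)
      case 0 then show ?thesis using yys by simp
    next
      case (Suc j)
      then have "j < k" using i by simp
      then have "ys ! j \<notin> A \<union> B" using yys(3) unfolding Lk_def by blast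
      then show ?thesis using yys(1) Suc by simp
    qed
  qed
  moreover have "last xs \<in> B - A" using yys \<open>ys \<noteq> []\<close> unfolding Lk_def by simp
  moreover have "length xs = Suc (Suc k)" using yys l by simp
  ultimately show "xs \<in> Lk A B (Suc k)" unfolding Lk_def by blast
qed

lemma T0: "Tk r A B 0 x = (\<Sum>y\<in>B - A. jump_prob r x y)"
  unfolding Tk_def Lk0 by (subst sum.reindex) (auto simp: inj_on_def)

lemma TSuc: "Tk r A B (Suc k) x = (\<Sum>y\<in>UNIV - (A \<union> B). jump_prob r x y * Tk r A B k y)"
proof -
  have inj: "inj_on (\<lambda>(y, ys). y # ys) ((UNIV - (A \<union> B)) \<times> Lk A B k)"
    by (auto simp: inj_on_def)
  have "Tk r A B (Suc k) x = (\<Sum>p\<in>(UNIV - (A \<union> B)) \<times> Lk A B k. path_weight (jump_prob r) x (fst p # snd p))"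
    unfolding Tk_def LkSuc by (subst sum.reindex[OF inj]) (auto intro: sum.cong)
  also have "\<dots> = (\<Sum>y\<in>UNIV - (A \<union> B). \<Sum>ys\<in>Lk A B k. path_weight (jump_prob r) x (y # ys))"
    by (simp add: sum.cartesian_product case_prod_unfold)
  also have "\<dots> = (\<Sum>y\<in>UNIV - (A \<union> B). jump_prob r x y * Tk r A B k y)"
    unfolding Tk_def by (simp add: sum_distrib_left)
  finally show ?thesis .
qed

lemma Tk_nonneg: "(\<And>x y. r x y \<ge> 0) \<Longrightarrow> Tk r A B k x \<ge> 0"
proof (induction k arbitrary: x)
  case 0 then show ?case unfolding T0 by (intro sum_nonneg jump_nonneg) auto
next
  case (Suc k) then show ?case unfolding TSuc by (intro sum_nonneg mult_nonneg_nonneg jump_nonneg) auto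
qed

lemma Tk_bound:
  fixes r :: "'a::finite \<Rightarrow> 'a \<Rightarrow> real"
  assumes nn: "\<And>x y. r x y \<ge> 0" and AB: "A \<inter> B = {}"
  shows "(\<Sum>k<n. Tk r A B k x) \<le> 1"
proof (induction n arbitrary: x)
  case 0 then show ?case by simp
next
  case (Suc n)
  have "(\<Sum>k<Suc n. Tk r A B k x) = Tk r A B 0 x + (\<Sum>k<n. Tk r A B (Suc k) x)"
    by (rule sum.lessThan_Suc_shift)
  also have "\<dots> = (\<Sum>y\<in>B - A. jump_prob r x y) + (\<Sum>y\<in>UNIV - (A \<union> B). jump_prob r x y * (\<Sum>k<n. Tk r A B k y))"
  proof -
    have "(\<Sum>k<n. \<Sum>y\<in>UNIV - (A \<union> B). jump_prob r x y * Tk r A B k y)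
        = (\<Sum>y\<in>UNIV - (A \<union> B). \<Sum>k<n. jump_prob r x y * Tk r A B k y)" by (rule sum.swap)
    then show ?thesis unfolding T0 TSuc by (simp add: sum_distrib_left)
  qed
  also have "\<dots> \<le> (\<Sum>y\<in>B - A. jump_prob r x y) + (\<Sum>y\<in>UNIV - (A \<union> B). jump_prob r x y)"
    by (intro add_left_mono sum_mono mult_left_le jump_nonneg Suc nn)
  also have "\<dots> = (\<Sum>y\<in>(B - A) \<union> (UNIV - (A \<union> B)). jump_prob r x y)"
    by (rule sum.union_disjoint[symmetric]) auto
  also have "\<dots> \<le> (\<Sum>y\<in>UNIV. jump_prob r x y)"
    by (intro sum_mono2 jump_nonneg nn) auto
  also have "\<dots> \<le> 1" by (rule jump_sum_le[OF nn])
  finally show ?case .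
qed

lemma Tk_summable:
  fixes r :: "'a::finite \<Rightarrow> 'a \<Rightarrow> real"
  assumes nn: "\<And>x y. r x y \<ge> 0" and AB: "A \<inter> B = {}"
  shows "summable (\<lambda>k. Tk r A B k x)"
proof (rule bounded_imp_summable)
  show "0 \<le> Tk r A B n x" for n by (rule Tk_nonneg[OF nn])
  show "(\<Sum>k\<le>n. Tk r A B k x) \<le> 1" for n
    using Tk_bound[OF nn AB, where n = "Suc n" and x = x] by (simp add: lessThan_Suc_atMost)
qed

lemma esc_step:
  fixes r :: "'a::finite \<Rightarrow> 'a \<Rightarrow> real"
  assumes nn: "\<And>x y. r x y \<ge> 0" and AB: "A \<inter> B = {}" and xB: "x \<notin> B"
  shows "escape_prob r A B x = (\<Sum>y\<in>UNIV. jump_prob r x y * (if y \<in> A then 0 else escape_prob r A B y))"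
proof -
  define Phi where "Phi y = (\<Sum>k. Tk r A B k y)" for y
  have sm: "summable (\<lambda>k. Tk r A B k y)" for y by (rule Tk_summable[OF nn AB])
  have "Phi x = Tk r A B 0 x + (\<Sum>k. Tk r A B (Suc k) x)"
    unfolding Phi_def using suminf_split_head[OF sm[of x]] by simp
  also have "(\<Sum>k. Tk r A B (Suc k) x) = (\<Sum>y\<in>UNIV - (A \<union> B). jump_prob r x y * Phi y)"
    unfolding TSuc Phi_def
    apply (subst suminf_sum)
    subgoal by (intro summable_mult sm)
    by (intro sum.cong refl) (rule suminf_mult[OF sm])
  finally have Phx: "Phi x = (\<Sum>y\<in>B - A. jump_prob r x y) + (\<Sum>y\<in>UNIV - (A \<union> B). jump_prob r x y * Phi y)"
    unfolding T0 .
  define g where "g y = (if y \<in> A then 0 else escape_prob r A B y)" for y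
  have gB: "g y = 1" if "y \<in> B" for y using that AB unfolding g_def escape_Tk by auto
  have gD: "g y = Phi y" if "y \<in> UNIV - (A \<union> B)" for y using that unfolding g_def escape_Tk Phi_def by auto
  have gA: "g y = 0" if "y \<in> A" for y using that unfolding g_def by auto
  have "(\<Sum>y\<in>UNIV. jump_prob r x y * g y) =
     (\<Sum>y\<in>B - A. jump_prob r x y * g y) + (\<Sum>y\<in>UNIV - (A \<union> B). jump_prob r x y * g y) + (\<Sum>y\<in>A. jump_prob r x y * g y)"
  proof -
    have "UNIV = ((B - A) \<union> (UNIV - (A \<union> B))) \<union> A" by auto
    then have "(\<Sum>y\<in>UNIV. jump_prob r x y * g y) = (\<Sum>y\<in>((B - A) \<union> (UNIV - (A \<union> B))) \<union> A. jump_prob r x y * g y)"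
      by simp
    also have "\<dots> = (\<Sum>y\<in>(B - A) \<union> (UNIV - (A \<union> B)). jump_prob r x y * g y) + (\<Sum>y\<in>A. jump_prob r x y * g y)"
      by (rule sum.union_disjoint) auto
    also have "(\<Sum>y\<in>(B - A) \<union> (UNIV - (A \<union> B)). jump_prob r x y * g y) =
        (\<Sum>y\<in>B - A. jump_prob r x y * g y) + (\<Sum>y\<in>UNIV - (A \<union> B). jump_prob r x y * g y)"
      by (rule sum.union_disjoint) auto
    finally show ?thesis .
  qed
  also have "\<dots> = (\<Sum>y\<in>B - A. jump_prob r x y) + (\<Sum>y\<in>UNIV - (A \<union> B). jump_prob r x y * Phi y)"
    using gB gD gA by simp
  finally have fin: "(\<Sum>y\<in>UNIV. jump_prob r x y * g y) = Phi x" using Phx by simp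
  have ex: "escape_prob r A B x = Phi x" using xB unfolding escape_Tk[of r A B x] Phi_def by simp
  have "(\<Sum>y\<in>UNIV. jump_prob r x y * (if y \<in> A then 0 else escape_prob r A B y)) = (\<Sum>y\<in>UNIV. jump_prob r x y * g y)"
    unfolding g_def ..
  then show ?thesis using ex fin by simp
qed


lemma pos_goal:
  fixes r :: "'a::finite \<Rightarrow> 'a \<Rightarrow> real" and h :: "'a \<Rightarrow> real"
  assumes nn: "\<And>x y. r x y \<ge> 0" and AB: "A \<inter> B = {}"
    and a: "a \<in> A" and b: "b \<in> B" and path: "(a, b) \<in> (jump_graph r)\<^sup>*"
    and hnn: "\<And>y. h y \<ge> 0" and hB: "\<And>y. y \<in> B \<Longrightarrow> h y = 1"
    and harm: "\<And>x. x \<notin> A \<union> B \<Longrightarrow> hold_rate r x * h x = (\<Sum>y\<in>UNIV - {x}. r x y * h y)"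
  shows "\<exists>e\<in>A. \<exists>y. y \<notin> A \<and> (e, y) \<in> jump_graph r \<and> h y > 0"
proof -
  let ?G = "\<exists>e\<in>A. \<exists>y. y \<notin> A \<and> (e, y) \<in> jump_graph r \<and> h y > 0"
  have "?G \<or> (u \<notin> A \<and> h u > 0)" if "(u, b) \<in> (jump_graph r)\<^sup>*" for u
    using that
  proof (induction rule: converse_rtrancl_induct)
    case base
    then show ?case using b AB hB[OF b] by auto
  next
    case (step x w)
    show ?case
    proof (cases ?G)
      case True then show ?thesis by simp
    next
      case False
      then have w: "w \<notin> A" "h w > 0" using step.IH by auto
      show ?thesis
      proof (cases "x \<in> A")
        case True then show ?thesis using w step.hyps(1) by blast
      next
        case xA: False
        show ?thesis
        proof (cases "x \<in> B")
          case True then show ?thesis using hB xA by auto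
        next
          case False
          have xw: "x \<noteq> w" "r x w > 0" using step.hyps(1) unfolding jump_graph_def by auto
          have "0 < r x w * h w" using xw w by simp
          also have "\<dots> \<le> (\<Sum>y\<in>UNIV - {x}. r x y * h y)"
            by (rule member_le_sum[of w "UNIV - {x}" "\<lambda>y. r x y * h y"]) (use xw in \<open>auto intro: mult_nonneg_nonneg nn hnn\<close>)
          also have "\<dots> = hold_rate r x * h x" using harm xA False by simp
          finally have "hold_rate r x * h x > 0" .
          then have "h x > 0" using hnn[of x] hold_rate_nonneg[of r x, OF nn]
            by (metis less_eq_real_def mult_zero_right)
          then show ?thesis using xA by simp
        qed
      qed
    qed
  qed
  then show ?thesis using path a by blast
qed

lemma esc_hold:
  fixes r :: "'a::finite \<Rightarrow> 'a \<Rightarrow> real"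
  assumes nn: "\<And>x y. r x y \<ge> 0" and AB: "A \<inter> B = {}" and xB: "x \<notin> B"
  shows "hold_rate r x * escape_prob r A B x = (\<Sum>y\<in>UNIV - {x}. r x y * (if y \<in> A then 0 else escape_prob r A B y))"
proof -
  have "hold_rate r x * escape_prob r A B x
      = (\<Sum>y\<in>UNIV. (hold_rate r x * jump_prob r x y) * (if y \<in> A then 0 else escape_prob r A B y))"
    unfolding esc_step[OF nn AB xB] sum_distrib_left by (simp add: mult.assoc)
  also have "\<dots> = (\<Sum>y\<in>UNIV. (if y = x then 0 else r x y * (if y \<in> A then 0 else escape_prob r A B y)))"
    unfolding hold_jump[OF nn] by (intro sum.cong) auto
  also have "\<dots> = (\<Sum>y\<in>UNIV - {x}. r x y * (if y \<in> A then 0 else escape_prob r A B y))"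
    unfolding sum_minus_pt ..
  finally show ?thesis .
qed

context mt
begin

lemma tame_ordered:
  assumes "\<And>C. C \<in> I \<Longrightarrow> tame d (a C)"
  shows "ordered_family I a"
  unfolding ordered_family_def
proof (intro conjI ballI allI impI)
  fix r N assume "r \<in> I"
  then show "a r N > 0" using assms tame_pos by blast
next
  fix r s assume rs: "r \<in> I" "s \<in> I" "r \<noteq> s"
  from cmp_tame[OF assms[OF rs(1)] assms[OF rs(2)]]
  consider (fin) L where "(\<lambda>N. a r N / a s N) \<longlonglongrightarrow> L"
    | (inf) "filterlim (\<lambda>N. a r N / a s N) at_top sequentially" by blast
  then show "convergent (\<lambda>N. arctan (a r N / a s N))"
  proof cases
    case fin
    then show ?thesis by (intro convergentI[of _ "arctan L"] tendsto_arctan)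
  next
    case inf
    have "((\<lambda>N. arctan (a r N / a s N)) \<longlongrightarrow> pi / 2) sequentially"
      by (rule filterlim_compose[OF tendsto_arctan_at_top inf])
    then show ?thesis by (rule convergentI)
  qed
qed

lemma GR_RN: "GR RN = jump_graph (RN 0)"
  unfolding GR_def jump_graph_def by simp

lemma jg_RN: "jump_graph (RN N) = jump_graph (RN 0)"
  unfolding jump_graph_def using A1 by fastforce

lemma Rok_RN: "Rok RN"
  unfolding Rok_def using nonneg ZT_rate by blast


lemma main_locale:
  fixes Cs :: "'a set set"
  assumes irred: "\<And>N. irreducible_chain (RN N)"
    and ne: "\<And>C. C \<in> Cs \<Longrightarrow> C \<noteq> {}"
    and disj: "\<And>C C'. C \<in> Cs \<Longrightarrow> C' \<in> Cs \<Longrightarrow> C \<noteq> C' \<Longrightarrow> C \<inter> C' = {}"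
    and other: "\<And>C. C \<in> Cs \<Longrightarrow> \<exists>C'\<in>Cs. C' \<noteq> C"
  shows "ordered_family Cs (\<lambda>C N. capacity (RN N) C (\<Union> (Cs - {C})) / sum (inv_meas (RN N)) C)"
proof -
  have conn: "\<forall>x y. (x, y) \<in> (jump_graph (RN 0))\<^sup>*"
    using irred[of 0] unfolding irreducible_chain_def reachable_def by blast
  have connN: "(x, y) \<in> (jump_graph (RN N))\<^sup>*" for x y N using conn jg_RN[of N] by simp
  have ex: "\<exists>m. (\<forall>x\<in>UNIV. tame 0 (m x)) \<and> (\<forall>x. x \<notin> (UNIV::'a set) \<longrightarrow> m x = (\<lambda>N. 0)) \<and>
     (\<forall>N y. (\<Sum>x\<in>UNIV - {y}. m x N * RN N x y) = m y N * hold_rate (RN N) y)"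
    by (rule inv_exist[of "UNIV :: 'a set", rule_format, OF UNIV_not_empty Rok_RN]) (use conn in \<open>auto simp: GR_RN\<close>)
  then obtain m where m: "\<forall>x\<in>UNIV. tame 0 (m x)"
    "\<forall>N y. (\<Sum>x\<in>UNIV - {y}. m x N * RN N x y) = m y N * hold_rate (RN N) y"
    by blast
  define tot where "tot N = (\<Sum>x\<in>UNIV. m x N)" for N
  have tot_pos: "tot N > 0" for N unfolding tot_def
    using m(1) tame_pos by (intro sum_pos) auto
  have tot: "tame 0 tot"
  proof -
    have "ZT 0 (\<lambda>N. \<Sum>x\<in>UNIV. m x N)" by (intro ZT_sum ZT_tame) (use m(1) in auto)
    then show ?thesis using tot_pos[of 0] ZT_pos unfolding tot_def by blast
  qed
  define mu where "mu x N = m x N / tot N" for x N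
  have mu_tame: "tame 0 (mu x)" for x
    using tame_div[OF m(1)[rule_format, of x] tot] unfolding mu_def by simp
  have inv: "inv_meas (RN N) = (\<lambda>x. mu x N)" for N
  proof -
    have ip: "invariant_prob (RN N) (\<lambda>x. mu x N)" unfolding invariant_prob_def
    proof (intro conjI allI)
      fix x show "mu x N \<ge> 0" using tame_pos[OF mu_tame] less_imp_le by blast
    next
      show "(\<Sum>x\<in>UNIV. mu x N) = 1" unfolding mu_def sum_divide_distrib[symmetric]
        using tot_pos[of N] unfolding tot_def by simp
    next
      fix y
      have "(\<Sum>x\<in>UNIV - {y}. mu x N * RN N x y) = (\<Sum>x\<in>UNIV - {y}. m x N * RN N x y) / tot N"
        unfolding mu_def sum_divide_distrib by (simp add: algebra_simps)
      also have "\<dots> = mu y N * hold_rate (RN N) y" using m(2) unfolding mu_def by simp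
      finally show "(\<Sum>x\<in>UNIV - {y}. mu x N * RN N x y) = mu y N * hold_rate (RN N) y" .
    qed
    show ?thesis unfolding inv_meas_def
    proof (rule the_equality)
      show "invariant_prob (RN N) (\<lambda>x. mu x N)" by (rule ip)
      fix m1 assume "invariant_prob (RN N) m1"
      then show "m1 = (\<lambda>x. mu x N)" by (rule inv_unique[OF nonneg connN _ ip])
    qed
  qed
  show ?thesis
  proof (rule tame_ordered[where d = 1])
    fix C assume C: "C \<in> Cs"
    define B where "B = \<Union> (Cs - {C})"
    have CB: "C \<inter> B = {}" using disj C unfolding B_def by blast
    obtain C' where C': "C' \<in> Cs" "C' \<noteq> C" using other C by blast
    obtain b where b: "b \<in> B" using ne[OF C'(1)] C' unfolding B_def by blast
    obtain c where c: "c \<in> C" using ne C by blast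
    define D0 where "D0 = UNIV - (C \<union> B)"
    define bb where "bb x = (if x \<in> B then (\<lambda>N::nat. 1::real) else (\<lambda>N. 0))" for x
    have reach: "\<forall>x\<in>D0. \<exists>y. y \<notin> D0 \<and> (x, y) \<in> (GR RN)\<^sup>*"
      using c conn unfolding D0_def GR_RN by blast
    have bbZT: "\<forall>x. x \<notin> D0 \<longrightarrow> ZT 0 (bb x)"
      unfolding bb_def using tame_one ZT_tame ZT_zero by auto
    have hex: "\<exists>h. (\<forall>x. x \<notin> D0 \<longrightarrow> h x = bb x) \<and> (\<forall>x. ZT 0 (h x)) \<and>
      (\<forall>N. \<forall>x\<in>D0. hold_rate (RN N) x * h x N = (\<Sum>y\<in>UNIV - {x}. RN N x y * h y N))"
      by (rule harm_exist[of D0, rule_format, OF Rok_RN]) (use reach bbZT in auto)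
    then obtain h where h: "\<forall>x. x \<notin> D0 \<longrightarrow> h x = bb x" "\<forall>x. ZT 0 (h x)"
      "\<forall>N. \<forall>x\<in>D0. hold_rate (RN N) x * h x N = (\<Sum>y\<in>UNIV - {x}. RN N x y * h y N)"
      by (elim exE conjE) blast
    have hB: "h y N = 1" if "y \<in> B" for y N using that h(1) unfolding D0_def bb_def by auto
    have hC: "h y N = 0" if "y \<in> C" for y N using that h(1) CB unfolding D0_def bb_def by auto
    have esc: "hold_rate (RN N) e * escape_prob (RN N) C B e = (\<Sum>y\<in>UNIV - {e}. RN N e y * h y N)"
      if e: "e \<in> C" for e N
    proof -
      define g where "g y = (if y \<in> C then 0 else escape_prob (RN N) C B y)" for y
      have gh: "g = (\<lambda>y. h y N)"
      proof (rule harm_unique[OF nonneg, of D0])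
        show "\<forall>x\<in>D0. \<exists>y. y \<notin> D0 \<and> (x, y) \<in> (jump_graph (RN N))\<^sup>*"
          using c connN unfolding D0_def by blast
      next
        fix x assume "x \<notin> D0"
        then show "g x = h x N" unfolding g_def D0_def using hB hC CB
          by (auto simp: escape_prob_def)
      next
        fix x assume "x \<in> D0"
        then show "hold_rate (RN N) x * g x = (\<Sum>y\<in>UNIV - {x}. RN N x y * g y)"
          using esc_hold[where r = "RN N" and x = x, OF nonneg CB] unfolding g_def D0_def by auto
      next
        fix x assume "x \<in> D0"
        then show "hold_rate (RN N) x * h x N = (\<Sum>y\<in>UNIV - {x}. RN N x y * h y N)" using h(3) by blast
      qed
      have "e \<notin> B" using e CB by blast
      then show ?thesis using esc_hold[where r = "RN N" and x = e, OF nonneg CB] gh unfolding g_def by metis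
    qed
    define num where "num N = (\<Sum>e\<in>C. mu e N * (\<Sum>y\<in>UNIV - {e}. RN N e y * h y N))" for N
    define den where "den N = (\<Sum>e\<in>C. mu e N)" for N
    have eq: "capacity (RN N) C B / sum (inv_meas (RN N)) C = num N / den N" for N
    proof -
      have "capacity (RN N) C B = num N"
        unfolding capacity_def num_def inv
        by (intro sum.cong refl) (simp add: mult.assoc esc)
      then show ?thesis unfolding den_def inv by simp
    qed
    have num: "tame 1 num"
    proof -
      have "ZT (0 + (1 + 0)) num" unfolding num_def
        by (intro ZT_sum ZT_mult ZT_tame mu_tame ZT_rate h(2)[rule_format]) auto
      moreover have "num 0 > 0"
      proof -
        obtain e y where ey: "e \<in> C" "y \<notin> C" "(e, y) \<in> jump_graph (RN 0)" "h y 0 > 0"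
          using pos_goal[OF nonneg CB c b connN, of "\<lambda>y. h y 0"] h(2) ZT_nonneg hB h(3)
          unfolding D0_def by blast
        have ye: "y \<noteq> e" "RN 0 e y > 0" using ey(3) unfolding jump_graph_def by auto
        have "0 < RN 0 e y * h y 0" using ye ey by simp
        also have "\<dots> \<le> (\<Sum>y\<in>UNIV - {e}. RN 0 e y * h y 0)"
          by (rule member_le_sum[of y "UNIV - {e}" "\<lambda>y. RN 0 e y * h y 0"])
             (use ye in \<open>auto intro: mult_nonneg_nonneg nonneg ZT_nonneg h(2)[rule_format]\<close>)
        finally have inner: "(\<Sum>y\<in>UNIV - {e}. RN 0 e y * h y 0) > 0" .
        show ?thesis unfolding num_def
        proof (rule sum_pos2[OF _ ey(1)])
          show "0 < mu e 0 * (\<Sum>y\<in>UNIV - {e}. RN 0 e y * h y 0)"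
            using inner tame_pos[OF mu_tame] by simp
          fix i
          have "0 \<le> (\<Sum>y\<in>UNIV - {i}. RN 0 i y * h y 0)"
            by (intro sum_nonneg mult_nonneg_nonneg nonneg ZT_nonneg[OF h(2)[rule_format]])
          then show "0 \<le> mu i 0 * (\<Sum>y\<in>UNIV - {i}. RN 0 i y * h y 0)"
            using tame_pos[OF mu_tame, of i 0] by simp
        qed simp
      qed
      ultimately show ?thesis using ZT_pos by simp
    qed
    have den: "tame 0 den"
    proof -
      have "ZT 0 den" unfolding den_def by (intro ZT_sum ZT_tame mu_tame) auto
      moreover have "den 0 > 0" unfolding den_def
        by (rule sum_pos2[OF _ c]) (auto intro: less_imp_le tame_pos[OF mu_tame])
      ultimately show ?thesis using ZT_pos by blast
    qed
    have "tame (1 - 0) (\<lambda>N. num N / den N)" by (rule tame_div[OF num den])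
    then show "tame 1 (\<lambda>N. capacity (RN N) C (\<Union> (Cs - {C})) / sum (inv_meas (RN N)) C)"
      unfolding B_def[symmetric] eq by simp
  qed
qed

end


theorem mainTheorem17:
  fixes RN :: "nat \<Rightarrow> 'a::finite \<Rightarrow> 'a \<Rightarrow> real"
  assumes nonneg: "\<And>N x y. RN N x y \<ge> 0"
    and irred: "\<And>N. irreducible_chain (RN N)"
    and A: "assumption_A RN"
    and two: "card (recurrent_classes (limit_rates RN)) \<ge> 2"
  shows "ordered_family (recurrent_classes (limit_rates RN))
           (\<lambda>C N. capacity (RN N) C (\<Union> (recurrent_classes (limit_rates RN) - {C}))
                  / sum (inv_meas (RN N)) C)"
proof -
  interpret mt RN by (rule mt.intro[OF nonneg A])
  let ?R = "limit_rates RN"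
  let ?Cs = "recurrent_classes ?R"
  have trans: "reachable ?R x z" if "reachable ?R x y" "reachable ?R y z" for x y z
    using that unfolding reachable_def by (rule rtrancl_trans)
  have refl: "reachable ?R x x" for x unfolding reachable_def by simp
  show ?thesis
  proof (rule main_locale[OF irred])
    fix C assume "C \<in> ?Cs"
    then obtain x where "C = {y. reachable ?R x y \<and> reachable ?R y x}"
      unfolding recurrent_classes_def by blast
    then show "C \<noteq> {}" using refl by blast
  next
    fix C C' assume C: "C \<in> ?Cs" and C': "C' \<in> ?Cs" and ne: "C \<noteq> C'"
    obtain x where x: "C = {y. reachable ?R x y \<and> reachable ?R y x}"
      using C unfolding recurrent_classes_def by blast
    obtain x' where x': "C' = {y. reachable ?R x' y \<and> reachable ?R y x'}"
      using C' unfolding recurrent_classes_def by blast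
    show "C \<inter> C' = {}"
    proof (rule ccontr)
      assume "C \<inter> C' \<noteq> {}"
      then obtain w where "w \<in> C" "w \<in> C'" by blast
      then have "reachable ?R x x'" "reachable ?R x' x" using x x' trans by blast+
      then have "C = C'" unfolding x x' using trans by blast
      then show False using ne by simp
    qed
  next
    fix C assume C: "C \<in> ?Cs"
    show "\<exists>C'\<in>?Cs. C' \<noteq> C"
    proof (rule ccontr)
      assume "\<not> (\<exists>C'\<in>?Cs. C' \<noteq> C)"
      then have "?Cs \<subseteq> {C}" by blast
      then have "card ?Cs \<le> 1" using card_mono[of "{C}" ?Cs] by simp
      then show False using two by simp
    qed
  qed
qed


end
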